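(* Under the standing setup below, almost surely as $n\to\infty$, $$\sup_{x\in\mathcal L(t)}\left|\frac{K_h(\varphi_n(x))}{K_{n,h}(\varphi_n(x))}-1\right|\to0\qquad\text{and}\qquad\sup_{x\in\mathcal L(t)}\left\|D_x\!\left[\frac{K_h(\varphi_n(x))}{K_{n,h}(\varphi_n(x))}\right]\right\|\to0.$$
   Context: Standing setup. Let $X_1,X_2,\dots$ be i.i.d. random vectors in $\mathbb R^d$ with common law $\mu$ having a Lebesgue density $f$. For $s\in\mathbb R$ let $\mathcal L(s)=\{x\in\mathbb R^d: f(x)\ge s\}$, and for $a\le b$ let $\mathcal L_a^b=\{x: a\le f(x)\le b\}$. A level $t>0$ in the interior of the range of $f$ is fixed; $\mathcal L(t)$ is nonempty and compact. Assumption 1: (i) $f$ is of class $C^2$ on $\mathbb R^d$; (ii) $\|D_xf\|>0$ on $\{x: f(x)=t\}$; (iii) $f$, $D_xf$, $D_x^2f$ are uniformly bounded on $\mathbb R^d$. $B$ denotes the unit ball of $\mathbb R^d$ centered at $0$. Assumption 2: $k:\mathbb R^d\to\mathbb R_+$ satisfies (i) $k$ is $C^2$; (ii) the support of $k$ is $B$; (iii) $k$ is bounded from below on $B/2$ by a positive number; (iv) $k(-x)=k(x)$. For $h>0$, $k_h(u)=k(u/h)$. Fix $h>0$ and $\varepsilon_0>0$ such that $\mathcal L_{t-\varepsilon_0}^{t+\varepsilon_0}$ contains no critical point of $f$ and $\varepsilon_0/\alpha(\varepsilon_0)<h/2$, where $\alpha(\varepsilon_0)=\inf\{\|D_xf(x)\|: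 x\in\mathcal L_{t-\varepsilon_0}^t\}$. Let $(\varepsilon_n)$ be positive numbers with $\varepsilon_n\le\varepsilon_0$ and $\varepsilon_n\to0$. Let $(\varphi_n)$ be $C^1$ diffeomorphisms of $\mathbb R^d$ with $\varphi_n(\mathcal L(t))=\mathcal L(t-\varepsilon_n)$, $\sup_{x\in\mathcal L(t)}\|\varphi_n(x)-x\|\to0$ and $\sup_{x\in\mathcal L(t)}\|D_x\varphi_n(x)-I_d\|\to0$. Empirical objects. Let $\widehat f_n$ be a differentiable density estimate built from $X_1,\dots,X_n$; $\mathcal L_n(t)=\{x:\widehat f_n(x)\ge t\}$; $J(n)=\{j\in\{1,\dots,n\}:\widehat f_n(X_j)\ge t\}$, $j(n)=\#J(n)$, $\mathbb P_n^t=\frac1{j(n)}\sum_{j\in J(n)}\delta_{X_j}$. Let $\Omega_n=[\|\widehat f_n-f\|_\infty\le\varepsilon_n]\cap[\inf\{\|D_x\widehat f_n(x)\|: x\in\mathcal L_{t-\varepsilon_0}^{t+\varepsilon_0}\}\ge\frac12\|D_xf\|_\infty]$; it is assumed that $\mathbf 1_{\Omega_n}\to1$ almost surely. Set $K_{n,h}(x)=\int_{\mathcal L_n(t)}k_h(y-x)\,\mathbb P_n^t(dy)$. Limit objects. $\mu^t$ is the conditional law of $X_1$ given $X_1\in\mathcal L(t)$; $K_h(x)=\int_{\mathcal L(t)}k_h(y-x)\,\mu^t(dy)$. *)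

theory Defs
  imports "HOL-Probability.Probability"
begin

definition superlevel :: "('a \<Rightarrow> real) \<Rightarrow> real \<Rightarrow> 'a set" where
  "superlevel g s = {x. g x \<ge> s}"

definition band :: "('a \<Rightarrow> real) \<Rightarrow> real \<Rightarrow> real \<Rightarrow> 'a set" where
  "band g a b = {x. a \<le> g x \<and> g x \<le> b}"

definition C1_fun :: "('a::real_normed_vector \<Rightarrow> 'b::real_normed_vector) \<Rightarrow> bool" where
  "C1_fun g \<longleftrightarrow> (\<exists>g'. (\<forall>x. (g has_derivative blinfun_apply (g' x)) (at x)) \<and> continuous_on UNIV g')"

definition C2_fun :: "('a::real_normed_vector \<Rightarrow> 'b::real_normed_vector) \<Rightarrow> bool" where
  "C2_fun g \<longleftrightarrow> (\<exists>g' g''. (\<forall>x. (g has_derivative blinfun_apply (g' x)) (at x)) \<and>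
      (\<forall>x. (g' has_derivative blinfun_apply (g'' x)) (at x)) \<and> continuous_on UNIV g'')"

definition C1_diffeo :: "('a::real_normed_vector \<Rightarrow> 'a) \<Rightarrow> bool" where
  "C1_diffeo \<phi> \<longleftrightarrow> bij \<phi> \<and> C1_fun \<phi> \<and> C1_fun (inv \<phi>)"

definition kh :: "('a::real_normed_vector \<Rightarrow> real) \<Rightarrow> real \<Rightarrow> 'a \<Rightarrow> real" where
  "kh k h u = k (u /\<^sub>R h)"

text \<open>Limit object K_h(x) = \<integral>_{L(t)} k_h(y-x) \<mu>^t(dy), with \<mu>^t the conditional law of
  X_1 (here X 0) given X_1 \<in> L(t).\<close>
definition Kh_lim :: "'b measure \<Rightarrow> (nat \<Rightarrow> 'b \<Rightarrow> 'a::euclidean_space) \<Rightarrow> ('a \<Rightarrow> real)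
    \<Rightarrow> real \<Rightarrow> ('a \<Rightarrow> real) \<Rightarrow> real \<Rightarrow> 'a \<Rightarrow> real" where
  "Kh_lim M X f t k h x =
     integral\<^sup>L M (\<lambda>\<omega>. indicator (superlevel f t) (X 0 \<omega>) * kh k h (X 0 \<omega> - x))
     / measure M {\<omega> \<in> space M. X 0 \<omega> \<in> superlevel f t}"

text \<open>Index set J(n) (samples X 0 .. X (n-1) play the role of X_1 .. X_n).\<close>
definition Jn :: "(nat \<Rightarrow> 'b \<Rightarrow> 'a \<Rightarrow> real) \<Rightarrow> (nat \<Rightarrow> 'b \<Rightarrow> 'a) \<Rightarrow> real \<Rightarrow> nat \<Rightarrow> 'b \<Rightarrow> nat set" where
  "Jn fhat X t n \<omega> = {j. j < n \<and> fhat n \<omega> (X j \<omega>) \<ge> t}"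

definition Knh :: "(nat \<Rightarrow> 'b \<Rightarrow> 'a::euclidean_space \<Rightarrow> real) \<Rightarrow> (nat \<Rightarrow> 'b \<Rightarrow> 'a) \<Rightarrow> real
    \<Rightarrow> ('a \<Rightarrow> real) \<Rightarrow> real \<Rightarrow> nat \<Rightarrow> 'b \<Rightarrow> 'a \<Rightarrow> real" where
  "Knh fhat X t k h n \<omega> x =
     (\<Sum>j\<in>Jn fhat X t n \<omega>. indicator (superlevel (fhat n \<omega>) t) (X j \<omega>) * kh k h (X j \<omega> - x))
     / real (card (Jn fhat X t n \<omega>))"

definition Omega_n :: "(nat \<Rightarrow> 'b \<Rightarrow> 'a::euclidean_space \<Rightarrow> real) \<Rightarrow> ('a \<Rightarrow> real) \<Rightarrow> ('a \<Rightarrow> 'a \<Rightarrow>\<^sub>L real)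
    \<Rightarrow> real \<Rightarrow> real \<Rightarrow> (nat \<Rightarrow> real) \<Rightarrow> nat \<Rightarrow> 'b \<Rightarrow> bool" where
  "Omega_n fhat f Df t \<epsilon>0 \<epsilon> n \<omega> \<longleftrightarrow>
     (\<forall>x. \<bar>fhat n \<omega> x - f x\<bar> \<le> \<epsilon> n) \<and>
     (\<forall>x \<in> band f (t - \<epsilon>0) (t + \<epsilon>0).
        onorm (frechet_derivative (fhat n \<omega>) (at x)) \<ge> (1/2) * (SUP y. norm (Df y)))"

end

theory Submission
  imports Defs
begin


lemma uc_compact_support:
  fixes g :: "'a::euclidean_space \<Rightarrow> 'b::real_normed_vector"
  assumes cont: "continuous_on UNIV g" and z: "\<And>x. norm x > R \<Longrightarrow> g x = 0"
  shows "uniformly_continuous_on UNIV g"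
proof -
  define R' where "R' = max R 0 + 1"
  have "uniformly_continuous_on (cball 0 R') g"
    by (rule compact_uniformly_continuous) (auto intro: continuous_on_subset[OF cont])
  show ?thesis unfolding uniformly_continuous_on_def
  proof (intro allI impI)
    fix e :: real assume e: "e > 0"
    obtain d where d: "d > 0" "\<forall>x\<in>cball 0 R'. \<forall>y\<in>cball 0 R'. dist y x < d \<longrightarrow> dist (g y) (g x) < e"
      using \<open>uniformly_continuous_on (cball 0 R') g\<close> e unfolding uniformly_continuous_on_def by metis
    show "\<exists>d>0. \<forall>x\<in>UNIV. \<forall>x'\<in>UNIV. dist x' x < d \<longrightarrow> dist (g x') (g x) < e"
    proof (intro exI[of _ "min d 1"] conjI ballI impI)
      fix x y :: 'a assume xy: "dist y x < min d 1"
      show "dist (g y) (g x) < e"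
      proof (cases "x \<in> cball 0 R' \<and> y \<in> cball 0 R'")
        case True then show ?thesis using d xy by auto
      next
        case False
        have "norm x - norm y \<le> dist y x" "norm y - norm x \<le> dist y x"
          by (metis dist_commute dist_norm norm_triangle_ineq2)+
        then have "norm x > R \<and> norm y > R" using False xy unfolding R'_def by auto
        then show ?thesis using z e by auto
      qed
    qed (use d in auto)
  qed
qed

lemma bdd_compact_support:
  fixes g :: "'a::euclidean_space \<Rightarrow> 'b::real_normed_vector"
  assumes cont: "continuous_on UNIV g" and z: "\<And>x. norm x > R \<Longrightarrow> g x = 0"
  shows "\<exists>B>0. \<forall>x. norm (g x) \<le> B"
proof -
  have "compact (g ` cball 0 R)"
    by (rule compact_continuous_image) (auto intro: continuous_on_subset[OF cont])
  then obtain B where B: "B > 0" "\<forall>y\<in>g ` cball 0 R. norm y \<le> B"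
    using compact_imp_bounded bounded_pos by metis
  show ?thesis
  proof (intro exI[of _ B] conjI allI)
    fix x show "norm (g x) \<le> B"
      using B z[of x] by (cases "norm x \<le> R") auto
  qed (use B in auto)
qed



locale kern =
  fixes k :: "'a::euclidean_space \<Rightarrow> real"
  assumes k_nonneg: "\<And>x. k x \<ge> 0"
    and k_C2: "C2_fun k"
    and k_supp: "closure {x. k x \<noteq> 0} = cball 0 1"
begin

definition kd :: "'a \<Rightarrow> 'a \<Rightarrow>\<^sub>L real" where
  "kd = (SOME g'. \<forall>x. (k has_derivative blinfun_apply (g' x)) (at x))"

lemma kd: "(k has_derivative blinfun_apply (kd x)) (at x)"
proof -
  obtain g' g'' where "\<forall>x. (k has_derivative blinfun_apply (g' x)) (at x)"
    using k_C2 unfolding C2_fun_def by blast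
  then have "\<exists>g'. \<forall>x. (k has_derivative blinfun_apply (g' x)) (at x)" by blast
  then have "\<forall>x. (k has_derivative blinfun_apply (kd x)) (at x)"
    unfolding kd_def by (rule someI_ex)
  then show ?thesis by blast
qed

lemma kd_cont: "continuous_on UNIV kd"
proof -
  obtain g' g'' where g': "\<forall>x. (k has_derivative blinfun_apply (g' x)) (at x)"
    and g'': "\<forall>x. (g' has_derivative blinfun_apply (g'' x)) (at x)"
    using k_C2 unfolding C2_fun_def by blast
  have "g' = kd"
  proof
    fix x show "g' x = kd x"
      using has_derivative_unique[OF g'[rule_format, of x] kd[of x]] blinfun_eqI by metis
  qed
  moreover have "continuous_on UNIV g'"
    by (intro continuous_at_imp_continuous_on ballI has_derivative_continuous[OF g''[rule_format]])
  ultimately show ?thesis by simp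
qed

lemma k_zero: "norm x > 1 \<Longrightarrow> k x = 0"
proof -
  assume "norm x > 1"
  then have "x \<notin> cball 0 1" by (simp add: mem_cball_0)
  then have "x \<notin> closure {x. k x \<noteq> 0}" by (subst k_supp)
  moreover have "{x. k x \<noteq> 0} \<subseteq> closure {x. k x \<noteq> 0}" by (rule closure_subset)
  ultimately show "k x = 0" by blast
qed

lemma k_cont: "continuous_on UNIV k"
  by (intro continuous_at_imp_continuous_on ballI has_derivative_continuous[OF kd])

lemma kd_zero: "norm x > 1 \<Longrightarrow> kd x = 0"
proof -
  assume x: "norm x > 1"
  have op: "open {y::'a. norm y > 1}"
    by (simp add: open_Collect_less continuous_on_norm_id continuous_on_const)
  have "((\<lambda>_. 0::real) has_derivative (\<lambda>_. 0)) (at x)" by simp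
  then have "(k has_derivative (\<lambda>_. 0)) (at x)"
    by (rule has_derivative_transform_within_open[OF _ op]) (use x k_zero in auto)
  then have eq: "blinfun_apply (kd x) = (\<lambda>_. 0)"
    using has_derivative_unique kd by blast
  show "kd x = 0"
  proof (rule blinfun_eqI)
    fix i show "blinfun_apply (kd x) i = blinfun_apply 0 i" using eq by simp
  qed
qed

lemma k_uc: "uniformly_continuous_on UNIV k"
  by (rule uc_compact_support[OF k_cont k_zero])

lemma kd_uc: "uniformly_continuous_on UNIV kd"
  by (rule uc_compact_support[OF kd_cont kd_zero])

lemma k_bdd: "\<exists>B>0. \<forall>x. \<bar>k x\<bar> \<le> B"
  using bdd_compact_support[OF k_cont k_zero] by simp

lemma kd_bdd: "\<exists>B>0. \<forall>x. norm (kd x) \<le> B"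
  using bdd_compact_support[OF kd_cont kd_zero] by simp

lemma k_taylor:
  assumes "\<eta> > 0"
  shows "\<exists>\<delta>>0. \<forall>w u. norm u < \<delta> \<longrightarrow> \<bar>k (w + u) - k w - kd w u\<bar> \<le> \<eta> * norm u"
proof -
  obtain \<delta> where d: "\<delta> > 0" "\<forall>x y. dist y x < \<delta> \<longrightarrow> dist (kd y) (kd x) < \<eta>"
    using kd_uc assms unfolding uniformly_continuous_on_def by blast
  show ?thesis
  proof (intro exI[of _ \<delta>] conjI allI impI)
    fix w u :: 'a assume u: "norm u < \<delta>"
    have "norm (k (w + u) - k w - blinfun_apply (kd w) ((w + u) - w)) \<le> norm ((w + u) - w) * \<eta>"
    proof (rule differentiable_bound_linearization[where S="ball w \<delta>"])
      fix t :: real assume t: "t \<in> {0..1}"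
      have "t * norm u \<le> norm u" using t by (simp add: mult_left_le_one_le)
      then show "w + t *\<^sub>R (w + u - w) \<in> ball w \<delta>" using u t by (simp add: dist_norm)
    next
      fix x assume "x \<in> ball w \<delta>"
      show "(k has_derivative blinfun_apply (kd x)) (at x within ball w \<delta>)"
        using kd has_derivative_at_withinI by blast
      have "dist x w < \<delta>" using \<open>x \<in> ball w \<delta>\<close> by (simp add: dist_commute)
      then have "norm (kd x - kd w) \<le> \<eta>" using d by (simp add: dist_norm less_imp_le)
      then show "onorm (blinfun_apply (kd x) - blinfun_apply (kd w)) \<le> \<eta>"
      proof -
        have "blinfun_apply (kd x) - blinfun_apply (kd w) = blinfun_apply (kd x - kd w)"
          by (rule ext) (simp add: blinfun.diff_left)
        then show ?thesis using \<open>norm (kd x - kd w) \<le> \<eta>\<close> by (simp add: norm_blinfun.rep_eq)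
      qed
    qed (use d in auto)
    then show "\<bar>k (w + u) - k w - kd w u\<bar> \<le> \<eta> * norm u" by (simp add: mult.commute)
  qed (use d in auto)
qed

end


lemma (in prob_space) slln_bounded:
  fixes Y :: "nat \<Rightarrow> 'a \<Rightarrow> real"
  assumes ind: "indep_vars (\<lambda>_. borel) Y UNIV"
    and dis: "\<And>i. distr M borel (Y i) = distr M borel (Y 0)"
    and bd: "\<And>i \<omega>. \<bar>Y i \<omega>\<bar> \<le> B"
  shows "AE \<omega> in M. (\<lambda>n. (\<Sum>i<n. Y i \<omega>) / real n) \<longlonglongrightarrow> expectation (Y 0)"
proof -
  define B' where "B' = \<bar>B\<bar> + 1"
  have B': "B' > 0" unfolding B'_def by simp
  define \<mu> where "\<mu> = expectation (Y 0)"
  have rv0: "random_variable borel (Y 0)"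
    using ind unfolding indep_vars_def by blast
  have conv_eps: "AE \<omega> in M. eventually (\<lambda>n. \<bar>(\<Sum>i<Suc n. Y i \<omega>) - real (Suc n) * \<mu>\<bar> < \<epsilon> * real (Suc n)) sequentially"
    if eps: "\<epsilon> > 0" for \<epsilon>
  proof -
    define c where "c = \<epsilon>\<^sup>2 / (2 * B'\<^sup>2)"
    have c: "c > 0" using eps B' unfolding c_def by simp
    define A where "A n = {x\<in>space M. \<bar>(\<Sum>i\<in>{..<Suc n}. Y i x) - real (card {..<Suc n}) * \<mu>\<bar> \<ge> \<epsilon> * real (Suc n)}" for n
    have Ameas: "A n \<in> sets M" for n
    proof -
      have [measurable]: "Y i \<in> borel_measurable M" for i
        using ind unfolding indep_vars_def by blast
      show ?thesis unfolding A_def by measurable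
    qed
    have Abound: "prob (A n) \<le> 2 * exp (- c) ^ Suc n" for n
    proof -
      interpret H: Hoeffding_ineq_iid M "{..<Suc n}" Y "Y 0" "-B'" B' \<mu>
      proof unfold_locales
        show "indep_vars (\<lambda>_. borel) Y {..<Suc n}"
          by (rule indep_vars_subset[OF ind]) auto
        show "AE x in M. Y 0 x \<in> {- B'..B'}"
        proof (intro AE_I2)
          fix x have "\<bar>Y 0 x\<bar> \<le> B" by (rule bd)
          then show "Y 0 x \<in> {- B'..B'}" unfolding B'_def by auto
        qed
      qed (auto simp: rv0 \<mu>_def intro: dis)
      have "prob (A n) \<le> 2 * exp (-2 * (\<epsilon> * real (Suc n))\<^sup>2 / (real (card {..<Suc n}) * (B' - - B')\<^sup>2))"
        unfolding A_def
        by (rule H.Hoeffding_ineq_abs_ge) (use eps B' in auto)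
      also have "-2 * (\<epsilon> * real (Suc n))\<^sup>2 / (real (card {..<Suc n}) * (B' - - B')\<^sup>2) = - c * real (Suc n)"
      proof -
        have e1: "real (card {..<Suc n}) = real (Suc n)" by simp
        have e2: "(B' - - B')\<^sup>2 = 4 * B'\<^sup>2" by (simp add: power2_eq_square algebra_simps)
        have N: "real (Suc n) > 0" by simp
        show ?thesis unfolding e1 e2 c_def using B' N
          by (simp add: field_simps power2_eq_square del: of_nat_Suc)
      qed
      also have "exp (- c * real (Suc n)) = exp (- c) ^ Suc n"
        by (metis exp_of_nat_mult mult.commute)
      finally show ?thesis .
    qed
    have sum: "summable (\<lambda>n. measure M (A n))"
    proof (rule summable_comparison_test[where g="\<lambda>n. 2 * exp (- c) ^ Suc n"])
      show "\<exists>N. \<forall>n\<ge>N. norm (measure M (A n)) \<le> 2 * exp (- c) ^ Suc n"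
        using Abound by auto
      have "summable (\<lambda>n. exp (- c) ^ n)" using c by (intro summable_geometric) simp
      then have "summable (\<lambda>n. exp (- c) ^ Suc n)" by (rule summable_ignore_initial_segment[where k=1, simplified])
      then show "summable (\<lambda>n. 2 * exp (- c) ^ Suc n)" by (rule summable_mult)
    qed
    have "AE x in M. eventually (\<lambda>n. x \<in> space M - A n) sequentially"
      by (rule borel_cantelli_AE1[OF Ameas _ sum]) (simp add: emeasure_eq_measure)
    then show ?thesis
      by (rule AE_mp) (auto intro!: AE_I2 elim!: eventually_mono simp: A_def not_le)
  qed
  have "AE \<omega> in M. \<forall>m::nat. eventually (\<lambda>n. \<bar>(\<Sum>i<Suc n. Y i \<omega>) - real (Suc n) * \<mu>\<bar> < (1 / real (Suc m)) * real (Suc n)) sequentially"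
    by (subst AE_all_countable) (intro allI conv_eps, simp)
  then show ?thesis
  proof (rule AE_mp, intro AE_I2 impI)
    fix \<omega> assume H: "\<forall>m::nat. eventually (\<lambda>n. \<bar>(\<Sum>i<Suc n. Y i \<omega>) - real (Suc n) * \<mu>\<bar> < (1 / real (Suc m)) * real (Suc n)) sequentially"
    have "(\<lambda>n. (\<Sum>i<Suc n. Y i \<omega>) / real (Suc n)) \<longlonglongrightarrow> \<mu>"
    proof (rule LIMSEQ_I)
      fix r :: real assume r: "r > 0"
      obtain m :: nat where m: "1 / real (Suc m) < r"
        using r by (metis reals_Archimedean2 lessThan_iff nat_approx_posE)
      from H[rule_format, of m] obtain N where N: "\<And>n. n \<ge> N \<Longrightarrow> \<bar>(\<Sum>i<Suc n. Y i \<omega>) - real (Suc n) * \<mu>\<bar> < (1 / real (Suc m)) * real (Suc n)"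
        unfolding eventually_sequentially by blast
      show "\<exists>no. \<forall>n\<ge>no. norm ((\<Sum>i<Suc n. Y i \<omega>) / real (Suc n) - \<mu>) < r"
      proof (intro exI allI impI)
        fix n assume "n \<ge> N"
        then have "\<bar>(\<Sum>i<Suc n. Y i \<omega>) - real (Suc n) * \<mu>\<bar> / real (Suc n) < 1 / real (Suc m)"
          using N[of n] by (simp add: field_simps)
        moreover have "\<bar>(\<Sum>i<Suc n. Y i \<omega>) - real (Suc n) * \<mu>\<bar> / real (Suc n) = norm ((\<Sum>i<Suc n. Y i \<omega>) / real (Suc n) - \<mu>)"
          by (simp add: field_simps abs_divide[symmetric] del: of_nat_Suc)
        ultimately show "norm ((\<Sum>i<Suc n. Y i \<omega>) / real (Suc n) - \<mu>) < r" using m by linarith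
      qed
    qed
    then show "(\<lambda>n. (\<Sum>i<n. Y i \<omega>) / real n) \<longlonglongrightarrow> expectation (Y 0)"
      unfolding \<mu>_def by (rule LIMSEQ_imp_Suc)
  qed
qed



lemma ennreal_const_bounded_zero:
  fixes c C :: ennreal
  assumes "\<And>N::nat. of_nat N * c \<le> C" "C < \<infinity>"
  shows "c = 0"
proof (rule ccontr)
  assume "c \<noteq> 0"
  have "c \<le> C" using assms(1)[of 1] by simp
  then have "c < \<infinity>" using assms(2) by auto
  obtain r where r: "c = ennreal r" "r \<ge> 0" using \<open>c < \<infinity>\<close> by (cases c) auto
  obtain R where R: "C = ennreal R" "R \<ge> 0" using assms(2) by (cases C) auto
  have "r > 0" using r \<open>c \<noteq> 0\<close> by auto
  obtain N :: nat where N: "real N > R / r" using reals_Archimedean2 by blast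
  have "ennreal (real N * r) \<le> ennreal R"
    using assms(1)[of N] r R by (simp add: ennreal_mult ennreal_of_nat_eq_real_of_nat)
  then have "real N * r \<le> R" using R by (simp add: ennreal_le_iff)
  moreover have "real N * r > R" using N \<open>r > 0\<close> by (simp add: field_simps)
  ultimately show False by simp
qed

lemma level_null_local:
  fixes f :: "'a::euclidean_space \<Rightarrow> real" and Df :: "'a \<Rightarrow> 'a \<Rightarrow>\<^sub>L real"
  assumes fD: "\<And>x. (f has_derivative blinfun_apply (Df x)) (at x)"
    and Dcont: "continuous_on UNIV Df"
    and x0: "Df x0 \<noteq> 0"
  shows "\<exists>r>0. {x \<in> ball x0 r. f x = t} \<in> null_sets lborel"
proof -
  obtain b where b: "b \<in> Basis" "Df x0 b \<noteq> 0"
    using x0 blinfun_euclidean_eqI[of "Df x0" 0] by auto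
  define a where "a = \<bar>Df x0 b\<bar>"
  have a: "a > 0" using b unfolding a_def by simp
  have "isCont Df x0" using Dcont by (simp add: continuous_on_eq_continuous_at)
  then obtain R where R: "R > 0" "\<And>x. dist x x0 < R \<Longrightarrow> dist (Df x) (Df x0) < a"
    using a unfolding continuous_at_eps_delta by blast
  have nz: "Df x b \<noteq> 0" if "x \<in> ball x0 R" for x
  proof
    assume "Df x b = 0"
    have "\<bar>Df x b - Df x0 b\<bar> = \<bar>(Df x - Df x0) b\<bar>" by (simp add: blinfun.diff_left)
    also have "\<dots> \<le> norm (Df x - Df x0) * norm b" by (metis norm_blinfun real_norm_def)
    also have "\<dots> < a" using R(2)[of x] that b by (simp add: dist_norm norm_minus_commute)
    finally show False using \<open>Df x b = 0\<close> unfolding a_def by simp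
  qed
  define r where "r = R / 2"
  have r: "r > 0" using R unfolding r_def by simp
  define S0 where "S0 = {x \<in> ball x0 r. f x = t}"
  have fcont: "continuous_on UNIV f"
    using fD has_derivative_continuous continuous_at_imp_continuous_on by blast
  have S0meas: "S0 \<in> sets borel"
  proof -
    have "S0 = ball x0 r \<inter> f -` {t}" unfolding S0_def by auto
    moreover have "closed {x. f x = t}" by (intro closed_Collect_eq fcont continuous_on_const)
    moreover have "f -` {t} = {x. f x = t}" by auto
    ultimately show ?thesis by auto
  qed
  have inj: "s = 0" if "x1 \<in> S0" "x1 + s *\<^sub>R b \<in> S0" for x1 s
  proof (rule ccontr)
    assume "s \<noteq> 0"
    define g where "g \<tau> = f (x1 + \<tau> *\<^sub>R (s *\<^sub>R b))" for \<tau>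
    have seg: "x1 + \<tau> *\<^sub>R (s *\<^sub>R b) \<in> ball x0 R" if "0 \<le> \<tau>" "\<tau> \<le> 1" for \<tau>
    proof -
      have c: "convex (ball x0 r)" by simp
      have "x1 + \<tau> *\<^sub>R (s *\<^sub>R b) = (1 - \<tau>) *\<^sub>R x1 + \<tau> *\<^sub>R (x1 + s *\<^sub>R b)"
        by (simp add: algebra_simps)
      also have "\<dots> \<in> ball x0 r"
        using convexD_alt[OF c, of x1 "x1 + s *\<^sub>R b" \<tau>] \<open>x1 \<in> S0\<close> \<open>x1 + s *\<^sub>R b \<in> S0\<close> that
        unfolding S0_def by auto
      finally show ?thesis unfolding r_def using R by auto
    qed
    have gd: "(g has_derivative (\<lambda>v. Df (x1 + \<tau> *\<^sub>R (s *\<^sub>R b)) (v *\<^sub>R (s *\<^sub>R b)))) (at \<tau>)" for \<tau>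
    proof -
      have inner: "((\<lambda>\<tau>. x1 + \<tau> *\<^sub>R (s *\<^sub>R b)) has_derivative (\<lambda>v. v *\<^sub>R (s *\<^sub>R b))) (at \<tau>)"
        by (auto intro!: derivative_eq_intros)
      show ?thesis unfolding g_def by (rule has_derivative_compose[OF inner fD])
    qed
    have "g 0 = g 1" using that unfolding g_def S0_def by simp
    moreover have "continuous_on {0..1} g"
      using gd has_derivative_continuous continuous_at_imp_continuous_on by blast
    ultimately have "\<exists>z. 0 < z \<and> z < 1 \<and> (\<lambda>v. Df (x1 + z *\<^sub>R (s *\<^sub>R b)) (v *\<^sub>R (s *\<^sub>R b))) = (\<lambda>v. 0)"
      by (intro Rolle_deriv[of 0 1 g "\<lambda>\<tau> v. Df (x1 + \<tau> *\<^sub>R (s *\<^sub>R b)) (v *\<^sub>R (s *\<^sub>R b))"] gd) auto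
    then obtain z where z: "0 < z" "z < 1"
      "(\<lambda>v. Df (x1 + z *\<^sub>R (s *\<^sub>R b)) (v *\<^sub>R (s *\<^sub>R b))) = (\<lambda>v. 0)" by blast
    then have "Df (x1 + z *\<^sub>R (s *\<^sub>R b)) (1 *\<^sub>R (s *\<^sub>R b)) = 0" by metis
    then have "s * Df (x1 + z *\<^sub>R (s *\<^sub>R b)) b = 0" by (simp add: blinfun.scaleR_right)
    moreover have "Df (x1 + z *\<^sub>R (s *\<^sub>R b)) b \<noteq> 0" using nz seg z by simp
    ultimately show False using \<open>s \<noteq> 0\<close> by simp
  qed
  define s where "s i = r / real (i + 2)" for i :: nat
  have s_pos: "s i > 0" for i using r unfolding s_def by simp
  have s_le: "s i \<le> r" for i using r unfolding s_def by (simp add: field_simps)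
  have s_inj: "s i = s j \<Longrightarrow> i = j" for i j using r unfolding s_def by (simp add: field_simps)
  define T where "T i = (\<lambda>y. y - s i *\<^sub>R b) -` S0" for i
  have Tmeas: "T i \<in> sets lborel" for i
  proof -
    have "(\<lambda>y::'a. y - s i *\<^sub>R b) \<in> borel_measurable borel" by simp
    then have "(\<lambda>y::'a. y - s i *\<^sub>R b) -` S0 \<inter> space borel \<in> sets borel" using S0meas by (rule measurable_sets)
    then show ?thesis unfolding T_def sets_lborel by simp
  qed
  have Teq: "emeasure lborel (T i) = emeasure lborel S0" for i
  proof -
    have "emeasure lborel S0 = emeasure (distr lborel borel ((+) (- (s i *\<^sub>R b)))) S0"
      by (simp add: lborel_distr_plus)
    also have "\<dots> = emeasure lborel ((+) (- (s i *\<^sub>R b)) -` S0 \<inter> space lborel)"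
      by (rule emeasure_distr) (use S0meas in auto)
    also have "(+) (- (s i *\<^sub>R b)) -` S0 \<inter> space lborel = T i"
      unfolding T_def by auto
    finally show ?thesis by simp
  qed
  have disj: "disjoint_family T"
    unfolding disjoint_family_on_def
  proof (intro ballI impI)
    fix i j :: nat assume "i \<in> UNIV" "j \<in> UNIV" "i \<noteq> j"
    show "T i \<inter> T j = {}"
    proof (rule ccontr)
      assume "T i \<inter> T j \<noteq> {}"
      then obtain y where y: "y - s i *\<^sub>R b \<in> S0" "y - s j *\<^sub>R b \<in> S0" unfolding T_def by auto
      have eq: "(y - s i *\<^sub>R b) + (s i - s j) *\<^sub>R b = y - s j *\<^sub>R b" by (simp add: algebra_simps)
      have "(y - s i *\<^sub>R b) + (s i - s j) *\<^sub>R b \<in> S0" unfolding eq by (rule y(2))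
      then have "s i - s j = 0" by (rule inj[OF y(1)])
      then show False using s_inj \<open>i \<noteq> j\<close> by simp
    qed
  qed
  have Tsub: "T i \<subseteq> ball x0 R" for i
  proof
    fix y assume "y \<in> T i"
    then have "y - s i *\<^sub>R b \<in> ball x0 r" unfolding T_def S0_def by auto
    then have n1: "norm (x0 - (y - s i *\<^sub>R b)) < r" by (simp add: dist_norm)
    moreover have n2: "norm (s i *\<^sub>R b) \<le> r" using s_le[of i] s_pos[of i] b by simp
    moreover have "norm (x0 - y) \<le> norm (x0 - (y - s i *\<^sub>R b)) + norm (s i *\<^sub>R b)"
      using norm_triangle_ineq4[of "x0 - (y - s i *\<^sub>R b)" "s i *\<^sub>R b"] by (simp add: algebra_simps)
    ultimately have "dist x0 y < r + r" by (simp add: dist_norm)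
    then show "y \<in> ball x0 R" unfolding r_def by simp
  qed
  have "emeasure lborel S0 = 0"
  proof (rule ennreal_const_bounded_zero)
    show "emeasure lborel (ball x0 R) < \<infinity>" by (rule emeasure_lborel_ball_finite)
    fix N :: nat
    have "of_nat N * emeasure lborel S0 = (\<Sum>i<N. emeasure lborel (T i))"
      by (simp add: Teq)
    also have "\<dots> = emeasure lborel (\<Union>i<N. T i)"
      by (rule sum_emeasure) (use Tmeas disj in \<open>auto simp: disjoint_family_on_def\<close>)
    also have "\<dots> \<le> emeasure lborel (ball x0 R)"
      by (rule emeasure_mono) (use Tsub in auto)
    finally show "of_nat N * emeasure lborel S0 \<le> emeasure lborel (ball x0 R)" .
  qed
  then have "S0 \<in> null_sets lborel" using S0meas by (simp add: null_sets_def)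
  then show ?thesis using r unfolding S0_def by blast
qed

lemma level_null:
  fixes f :: "'a::euclidean_space \<Rightarrow> real" and Df :: "'a \<Rightarrow> 'a \<Rightarrow>\<^sub>L real"
  assumes fD: "\<And>x. (f has_derivative blinfun_apply (Df x)) (at x)"
    and Dcont: "continuous_on UNIV Df"
    and nz: "\<And>x. f x = t \<Longrightarrow> Df x \<noteq> 0"
    and bd: "bounded {x. f x = t}"
  shows "{x. f x = t} \<in> null_sets lborel"
proof -
  define S where "S = {x. f x = t}"
  have fcont: "continuous_on UNIV f"
    using fD has_derivative_continuous continuous_at_imp_continuous_on by blast
  have "closed S" unfolding S_def by (intro closed_Collect_eq fcont continuous_on_const)
  then have cS: "compact S" using bd unfolding S_def by (simp add: compact_eq_bounded_closed)
  have "\<forall>x\<in>S. \<exists>r>0. {y \<in> ball x r. f y = t} \<in> null_sets lborel"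
    using level_null_local[OF fD Dcont] nz unfolding S_def by blast
  then obtain r where r: "\<And>x. x \<in> S \<Longrightarrow> r x > 0 \<and> {y \<in> ball x (r x). f y = t} \<in> null_sets lborel"
    by metis
  have cover: "S \<subseteq> (\<Union>x\<in>S. ball x (r x))" using r by auto
  obtain F where F: "F \<subseteq> S" "finite F" "S \<subseteq> (\<Union>x\<in>F. ball x (r x))"
    by (rule compactE_image[OF cS, of S "\<lambda>x. ball x (r x)"]) (use cover in auto)
  have "S = (\<Union>x\<in>F. {y \<in> ball x (r x). f y = t})" using F unfolding S_def by blast
  also have "\<dots> \<in> null_sets lborel"
    using F r by (intro null_sets_UN' countable_finite) auto
  finally show ?thesis unfolding S_def .
qed



lemma tendsto_approx:
  fixes a b :: "nat \<Rightarrow> real"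
  assumes "\<And>r. r > 0 \<Longrightarrow> eventually (\<lambda>n. \<bar>a n - b n\<bar> \<le> r) sequentially"
    and "b \<longlonglongrightarrow> L"
  shows "a \<longlonglongrightarrow> L"
proof (rule LIMSEQ_I)
  fix r :: real assume r: "r > 0"
  have "eventually (\<lambda>n. dist (b n) L < r / 2) sequentially"
    using assms(2)[unfolded tendsto_iff, rule_format, of "r / 2"] r by simp
  moreover have "eventually (\<lambda>n. \<bar>a n - b n\<bar> \<le> r / 4) sequentially" using assms(1)[of "r / 4"] r by simp
  ultimately have "eventually (\<lambda>n. norm (a n - L) < r) sequentially"
  proof eventually_elim
    case (elim n)
    have "\<bar>a n - L\<bar> \<le> \<bar>a n - b n\<bar> + \<bar>b n - L\<bar>" using abs_triangle_ineq[of "a n - b n" "b n - L"] by simp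
    then show ?case using elim r by (simp add: dist_real_def)
  qed
  then show "\<exists>no. \<forall>n\<ge>no. norm (a n - L) < r" unfolding eventually_sequentially by blast
qed



lemma core_avg:
  fixes a l :: "nat \<Rightarrow> real" and bm :: "nat \<Rightarrow> nat \<Rightarrow> real" and J :: "nat \<Rightarrow> nat set"
  assumes Jsub: "\<And>n. J n \<subseteq> {..<n}"
    and aB: "\<And>j. \<bar>a j\<bar> \<le> B"
    and l01: "\<And>j. l j = 0 \<or> l j = 1"
    and b01: "\<And>m j. bm m j = 0 \<or> bm m j = 1"
    and mis: "\<And>m. eventually (\<lambda>n. \<forall>j<n. (j \<in> J n) \<noteq> (l j = 1) \<longrightarrow> bm m j = 1) sequentially"
    and band: "\<And>m. (\<lambda>n. (\<Sum>j<n. bm m j) / real n) \<longlonglongrightarrow> P m"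
    and P0: "P \<longlonglongrightarrow> 0"
    and E: "(\<lambda>n. (\<Sum>j<n. l j * a j) / real n) \<longlonglongrightarrow> E"
  shows "(\<lambda>n. (\<Sum>j\<in>J n. a j) / real n) \<longlonglongrightarrow> E"
proof (rule tendsto_approx[OF _ E])
  fix r :: real assume r: "r > 0"
  define B' where "B' = \<bar>B\<bar> + 1"
  have B': "B' > 0" unfolding B'_def by simp
  have "eventually (\<lambda>m. \<bar>P m - 0\<bar> < r / (2 * B')) sequentially"
    using P0 r B' unfolding tendsto_iff by (auto simp: dist_real_def)
  then obtain m where m: "\<bar>P m\<bar> < r / (2 * B')" unfolding eventually_sequentially by auto
  have ev1: "eventually (\<lambda>n. \<bar>(\<Sum>j<n. bm m j) / real n - P m\<bar> < r / (2 * B')) sequentially"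
    using band[of m] r B' unfolding tendsto_iff by (auto simp: dist_real_def)
  show "eventually (\<lambda>n. \<bar>(\<Sum>j\<in>J n. a j) / real n - (\<Sum>j<n. l j * a j) / real n\<bar> \<le> r) sequentially"
    using ev1 mis[of m] eventually_gt_at_top[of 0]
  proof eventually_elim
    case (elim n)
    have npos: "real n > 0" using elim by simp
    have "(\<Sum>j<n. (if j \<in> J n then 1 else 0) * a j) = (\<Sum>j<n. if j \<in> J n then a j else 0)"
      by (rule sum.cong) auto
    also have "\<dots> = sum a ({..<n} \<inter> J n)" by (rule sum.inter_restrict[symmetric]) simp
    also have "{..<n} \<inter> J n = J n" using Jsub[of n] by auto
    finally have sJ: "(\<Sum>j\<in>J n. a j) = (\<Sum>j<n. (if j \<in> J n then 1 else 0) * a j)" by simp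
    have "\<bar>(\<Sum>j\<in>J n. a j) - (\<Sum>j<n. l j * a j)\<bar> = \<bar>\<Sum>j<n. ((if j \<in> J n then 1 else 0) - l j) * a j\<bar>"
      unfolding sJ by (simp add: sum_subtractf left_diff_distrib)
    also have "\<dots> \<le> (\<Sum>j<n. \<bar>((if j \<in> J n then 1 else 0) - l j) * a j\<bar>)" by (rule sum_abs)
    also have "\<dots> \<le> (\<Sum>j<n. B' * bm m j)"
    proof (rule sum_mono)
      fix j assume "j \<in> {..<n}"
      then have jn: "j < n" by simp
      show "\<bar>((if j \<in> J n then 1 else 0) - l j) * a j\<bar> \<le> B' * bm m j"
      proof (cases "(j \<in> J n) \<noteq> (l j = 1)")
        case True
        then have "bm m j = 1" using elim jn by blast
        moreover have "\<bar>(if j \<in> J n then 1 else 0) - l j\<bar> \<le> 1" using l01[of j] by auto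
        moreover have "\<bar>a j\<bar> \<le> B'" using aB[of j] unfolding B'_def by simp
        ultimately have "\<bar>(if j \<in> J n then 1 else 0) - l j\<bar> * \<bar>a j\<bar> \<le> 1 * B'"
          by (intro mult_mono) auto
        then show ?thesis using \<open>bm m j = 1\<close> by (simp only: abs_mult mult_1 mult_1_right)
      next
        case False
        then have "(if j \<in> J n then 1 else 0) - l j = 0" using l01[of j] by auto
        moreover have "bm m j \<ge> 0" using b01[of m j] by auto
        ultimately show ?thesis using B' by simp
      qed
    qed
    also have "\<dots> = B' * (\<Sum>j<n. bm m j)" by (simp add: sum_distrib_left)
    finally have d: "\<bar>(\<Sum>j\<in>J n. a j) - (\<Sum>j<n. l j * a j)\<bar> \<le> B' * (\<Sum>j<n. bm m j)" .
    have "(\<Sum>j<n. bm m j) / real n < r / B'"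
      using elim(1) m by (simp add: abs_less_iff field_simps)
    then have "B' * ((\<Sum>j<n. bm m j) / real n) \<le> r" using B' by (simp add: field_simps)
    moreover have "\<bar>(\<Sum>j\<in>J n. a j) / real n - (\<Sum>j<n. l j * a j) / real n\<bar>
        = \<bar>(\<Sum>j\<in>J n. a j) - (\<Sum>j<n. l j * a j)\<bar> / real n"
      using npos by (simp add: diff_divide_distrib[symmetric] abs_divide)
    moreover have "\<bar>(\<Sum>j\<in>J n. a j) - (\<Sum>j<n. l j * a j)\<bar> / real n \<le> B' * ((\<Sum>j<n. bm m j) / real n)"
      using d npos by (simp add: divide_right_mono field_simps)
    ultimately show ?case by linarith
  qed
qed

lemma core_ratio:
  fixes a l :: "nat \<Rightarrow> real" and bm :: "nat \<Rightarrow> nat \<Rightarrow> real" and J :: "nat \<Rightarrow> nat set"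
  assumes Jsub: "\<And>n. J n \<subseteq> {..<n}"
    and aB: "\<And>j. \<bar>a j\<bar> \<le> B"
    and l01: "\<And>j. l j = 0 \<or> l j = 1"
    and b01: "\<And>m j. bm m j = 0 \<or> bm m j = 1"
    and mis: "\<And>m. eventually (\<lambda>n. \<forall>j<n. (j \<in> J n) \<noteq> (l j = 1) \<longrightarrow> bm m j = 1) sequentially"
    and band: "\<And>m. (\<lambda>n. (\<Sum>j<n. bm m j) / real n) \<longlonglongrightarrow> P m"
    and P0: "P \<longlonglongrightarrow> 0"
    and E: "(\<lambda>n. (\<Sum>j<n. l j * a j) / real n) \<longlonglongrightarrow> E"
    and p: "(\<lambda>n. (\<Sum>j<n. l j) / real n) \<longlonglongrightarrow> p" and p0: "p \<noteq> 0"
  shows "(\<lambda>n. (\<Sum>j\<in>J n. a j) / real (card (J n))) \<longlonglongrightarrow> E / p"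
proof -
  have A: "(\<lambda>n. (\<Sum>j\<in>J n. a j) / real n) \<longlonglongrightarrow> E"
    by (rule core_avg[OF Jsub aB l01 b01 mis band P0 E])
  have C: "(\<lambda>n. (\<Sum>j\<in>J n. 1) / real n) \<longlonglongrightarrow> p"
    by (rule core_avg[OF Jsub _ l01 b01 mis band P0, of "\<lambda>_. 1" 1]) (use p in auto)
  have "(\<lambda>n. ((\<Sum>j\<in>J n. a j) / real n) / ((\<Sum>j\<in>J n. 1) / real n)) \<longlonglongrightarrow> E / p"
    by (rule tendsto_divide[OF A C p0])
  moreover have "eventually (\<lambda>n. ((\<Sum>j\<in>J n. a j) / real n) / ((\<Sum>j\<in>J n. 1) / real n)
       = (\<Sum>j\<in>J n. a j) / real (card (J n))) sequentially"
    using eventually_gt_at_top[of 0] by eventually_elim simp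
  ultimately show ?thesis using Lim_transform_eventually by fastforce
qed



locale sdata = prob_space M for M :: "'b measure" +
  fixes X :: "nat \<Rightarrow> 'b \<Rightarrow> 'a::euclidean_space" and f :: "'a \<Rightarrow> real"
    and Df :: "'a \<Rightarrow> 'a \<Rightarrow>\<^sub>L real" and t :: real
  assumes indep: "indep_vars (\<lambda>_. borel) X UNIV"
    and dens_nonneg: "\<And>x. f x \<ge> 0"
    and distr: "\<And>i. distributed M lborel (X i) (\<lambda>x. ennreal (f x))"
    and t_pos: "t > 0"
    and Lt_ne: "superlevel f t \<noteq> {}"
    and Lt_cpt: "compact (superlevel f t)"
    and f_D1: "\<And>x. (f has_derivative blinfun_apply (Df x)) (at x)"
    and Dcont: "continuous_on UNIV Df"
    and grad_pos: "\<And>x. f x = t \<Longrightarrow> norm (Df x) > 0"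
begin

definition "L = superlevel f t"
definition "p = prob {\<omega> \<in> space M. X 0 \<omega> \<in> L}"

lemma Xmeas[measurable]: "X i \<in> borel_measurable M"
  using distributed_measurable[OF distr[of i]] by simp

lemma fcont: "continuous_on UNIV f"
  using f_D1 has_derivative_continuous continuous_at_imp_continuous_on by blast

lemma fmeas[measurable]: "f \<in> borel_measurable borel"
  by (rule borel_measurable_continuous_onI[OF fcont])

lemma L_closed: "closed L"
  unfolding L_def using Lt_cpt by (simp add: compact_imp_closed)

lemma Lmeas[measurable]: "L \<in> sets borel"
  using L_closed by simp

lemma distr_g:
  assumes g[measurable]: "g \<in> borel_measurable borel"
  shows "distr M borel (\<lambda>\<omega>. g (X i \<omega>)) = distr M borel (\<lambda>\<omega>. g (X 0 \<omega>))"
proof -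
  have e: "distr M borel (\<lambda>\<omega>. g (X j \<omega>)) = distr (density lborel (\<lambda>x. ennreal (f x))) borel g" for j
  proof -
    have "distr M borel (\<lambda>\<omega>. g (X j \<omega>)) = distr (distr M lborel (X j)) borel g"
      by (subst distr_distr) (auto simp: comp_def)
    also have "distr M lborel (X j) = density lborel (\<lambda>x. ennreal (f x))"
      by (rule distributed_distr_eq_density[OF distr])
    finally show ?thesis .
  qed
  show ?thesis by (simp only: e)
qed

lemma slln_g:
  assumes g[measurable]: "g \<in> borel_measurable borel" and bd: "\<And>y. \<bar>g y\<bar> \<le> B"
  shows "AE \<omega> in M. (\<lambda>n. (\<Sum>i<n. g (X i \<omega>)) / real n) \<longlonglongrightarrow> expectation (\<lambda>\<omega>. g (X 0 \<omega>))"
proof -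
  have "indep_vars (\<lambda>_. borel) (\<lambda>i \<omega>. g (X i \<omega>)) UNIV"
    by (rule indep_vars_compose2[OF indep]) simp
  then show ?thesis
    by (rule slln_bounded[of "\<lambda>i \<omega>. g (X i \<omega>)" B, OF _ distr_g[OF g] bd])
qed

lemma exp_ind:
  assumes [measurable]: "A \<in> sets borel"
  shows "expectation (\<lambda>\<omega>. indicator A (X 0 \<omega>)) = prob {\<omega> \<in> space M. X 0 \<omega> \<in> A}"
proof -
  have "expectation (\<lambda>\<omega>. indicator A (X 0 \<omega>)) = expectation (indicator {\<omega> \<in> space M. X 0 \<omega> \<in> A})"
    by (rule Bochner_Integration.integral_cong) (auto simp: indicator_def)
  also have "\<dots> = prob {\<omega> \<in> space M. X 0 \<omega> \<in> A}" by (simp add: Int_absorb2)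
  finally show ?thesis .
qed

lemma prob_level0: "prob {\<omega> \<in> space M. f (X 0 \<omega>) = t} = 0"
proof -
  have bd: "bounded {x. f x = t}"
    by (rule bounded_subset[OF compact_imp_bounded[OF Lt_cpt]]) (auto simp: superlevel_def)
  have nz: "Df x \<noteq> 0" if "f x = t" for x using grad_pos[OF that] by auto
  have N: "{x. f x = t} \<in> null_sets lborel"
    by (rule level_null[OF f_D1 Dcont nz bd])
  have "emeasure M (X 0 -` {x. f x = t} \<inter> space M) = (\<integral>\<^sup>+x. ennreal (f x) * indicator {x. f x = t} x \<partial>lborel)"
    by (rule distributed_emeasure[OF distr]) simp
  also have "\<dots> = 0" by (rule nn_integral_null_set[OF N])
  finally have "emeasure M (X 0 -` {x. f x = t} \<inter> space M) = 0" by simp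
  moreover have "X 0 -` {x. f x = t} \<inter> space M = {\<omega> \<in> space M. f (X 0 \<omega>) = t}" by auto
  ultimately show ?thesis by (simp add: measure_def)
qed

definition "Bd m = {y. \<bar>f y - t\<bar> \<le> 1 / real (Suc m)}"

lemma Bdmeas[measurable]: "Bd m \<in> sets borel"
  unfolding Bd_def by measurable

lemma band_lim: "(\<lambda>m. prob {\<omega> \<in> space M. X 0 \<omega> \<in> Bd m}) \<longlonglongrightarrow> 0"
proof -
  define A where "A m = {\<omega> \<in> space M. X 0 \<omega> \<in> Bd m}" for m
  have "range A \<subseteq> sets M" unfolding A_def by auto
  moreover have "decseq A"
    unfolding decseq_def A_def Bd_def
  proof (intro allI impI subsetI)
    fix m n :: nat and \<omega> assume mn: "m \<le> n" and w: "\<omega> \<in> {\<omega> \<in> space M. X 0 \<omega> \<in> {y. \<bar>f y - t\<bar> \<le> 1 / real (Suc n)}}"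
    have "1 / real (Suc n) \<le> 1 / real (Suc m)" by (rule frac_le) (use mn in auto)
    then show "\<omega> \<in> {\<omega> \<in> space M. X 0 \<omega> \<in> {y. \<bar>f y - t\<bar> \<le> 1 / real (Suc m)}}" using w by auto
  qed
  ultimately have "(\<lambda>m. prob (A m)) \<longlonglongrightarrow> prob (\<Inter>m. A m)"
    by (rule finite_Lim_measure_decseq)
  moreover have "(\<Inter>m. A m) = {\<omega> \<in> space M. f (X 0 \<omega>) = t}"
  proof
    show "(\<Inter>m. A m) \<subseteq> {\<omega> \<in> space M. f (X 0 \<omega>) = t}"
    proof
      fix \<omega> assume "\<omega> \<in> (\<Inter>m. A m)"
      then have sp: "\<omega> \<in> space M" and H: "\<And>m. \<bar>f (X 0 \<omega>) - t\<bar> \<le> 1 / real (Suc m)"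
        unfolding A_def Bd_def by auto
      have "\<bar>f (X 0 \<omega>) - t\<bar> \<le> 0"
      proof (rule field_le_epsilon)
        fix e :: real assume "e > 0"
        then obtain m where "1 / real (Suc m) < e" using nat_approx_posE by blast
        then show "\<bar>f (X 0 \<omega>) - t\<bar> \<le> 0 + e" using H[of m] by simp
      qed
      then show "\<omega> \<in> {\<omega> \<in> space M. f (X 0 \<omega>) = t}" using sp by simp
    qed
  next
    show "{\<omega> \<in> space M. f (X 0 \<omega>) = t} \<subseteq> (\<Inter>m. A m)"
      unfolding A_def Bd_def by auto
  qed
  ultimately show ?thesis unfolding A_def by (simp only: prob_level0)
qed

end


context sdata
begin

lemma prob_pos_local:
  assumes x: "x \<in> L" and rho: "\<rho> > 0"
  shows "prob {\<omega> \<in> space M. X 0 \<omega> \<in> L \<inter> ball x \<rho>} > 0"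
proof -
  have "\<exists>w\<in>ball x \<rho>. f w > t"
  proof (rule ccontr)
    assume "\<not> (\<exists>w\<in>ball x \<rho>. f w > t)"
    then have le: "\<And>w. w \<in> ball x \<rho> \<Longrightarrow> f w \<le> t" by (simp add: not_less)
    have fx: "f x = t" using le[of x] rho x unfolding L_def superlevel_def by simp
    have "eventually (\<lambda>y. f y \<le> f x) (at x)"
      unfolding eventually_at using rho le fx by (auto simp: dist_commute)
    then have "blinfun_apply (Df x) = (\<lambda>h. 0)" by (rule has_derivative_local_max[OF f_D1])
    then have "Df x = 0" by (intro blinfun_eqI) simp
    then show False using grad_pos[OF fx] by simp
  qed
  then obtain w where w: "w \<in> ball x \<rho>" "f w > t" by blast
  have "open ({y. f y > t} \<inter> ball x \<rho>)"
    by (intro open_Int open_Collect_less continuous_on_const fcont) simp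
  then obtain \<rho>' where \<rho>': "\<rho>' > 0" "ball w \<rho>' \<subseteq> {y. f y > t} \<inter> ball x \<rho>"
    using w unfolding open_contains_ball by blast
  have sub: "ball w \<rho>' \<subseteq> L \<inter> ball x \<rho>" using \<rho>' unfolding L_def superlevel_def by auto
  have "0 < measure lborel (ball w \<rho>')" by (rule content_ball_pos[OF \<rho>'(1)])
  moreover have "emeasure lborel (ball w \<rho>') = ennreal (measure lborel (ball w \<rho>'))"
    using emeasure_lborel_ball_finite[of w \<rho>'] by (intro emeasure_eq_ennreal_measure) (simp add: less_top)
  ultimately have pos_ball: "0 < emeasure lborel (ball w \<rho>')" by simp
  have "0 < ennreal t * emeasure lborel (ball w \<rho>')" using pos_ball t_pos
    by (simp add: ennreal_zero_less_mult_iff)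
  also have "\<dots> = (\<integral>\<^sup>+y. ennreal t * indicator (ball w \<rho>') y \<partial>lborel)"
    by (rule nn_integral_cmult_indicator[symmetric]) simp
  also have "\<dots> \<le> (\<integral>\<^sup>+y. ennreal (f y) * indicator (ball w \<rho>') y \<partial>lborel)"
  proof (rule nn_integral_mono)
    fix y show "ennreal t * indicator (ball w \<rho>') y \<le> ennreal (f y) * indicator (ball w \<rho>') y"
    proof (cases "y \<in> ball w \<rho>'")
      case True
      then have "t < f y" using \<rho>'(2) by auto
      then show ?thesis using True by (simp add: ennreal_leI)
    qed simp
  qed
  also have "\<dots> = emeasure M (X 0 -` ball w \<rho>' \<inter> space M)"
    by (rule distributed_emeasure[OF distr, symmetric]) simp
  also have "\<dots> \<le> emeasure M {\<omega> \<in> space M. X 0 \<omega> \<in> L \<inter> ball x \<rho>}"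
    by (rule emeasure_mono) (use sub in auto)
  also have "\<dots> = ennreal (prob {\<omega> \<in> space M. X 0 \<omega> \<in> L \<inter> ball x \<rho>})"
    by (rule emeasure_eq_measure)
  finally show ?thesis by simp
qed

lemma prob_pos_unif:
  assumes rho: "\<rho> > 0"
  shows "\<exists>m>0. \<forall>x\<in>L. prob {\<omega> \<in> space M. X 0 \<omega> \<in> L \<inter> ball x \<rho>} \<ge> m"
proof -
  define q where "q x = prob {\<omega> \<in> space M. X 0 \<omega> \<in> L \<inter> ball x (\<rho> / 2)}" for x
  have cL: "compact L" using Lt_cpt unfolding L_def .
  have cover: "L \<subseteq> (\<Union>x\<in>L. ball x (\<rho> / 2))" using rho by auto
  obtain F where F: "F \<subseteq> L" "finite F" "L \<subseteq> (\<Union>x\<in>F. ball x (\<rho> / 2))"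
    by (rule compactE_image[OF cL, of L "\<lambda>x. ball x (\<rho> / 2)"]) (use cover in auto)
  have "L \<noteq> {}" using Lt_ne unfolding L_def .
  then have Fne: "F \<noteq> {}" using F(3) by auto
  define m where "m = Min (q ` F)"
  have qpos: "q y > 0" if "y \<in> F" for y
    unfolding q_def by (rule prob_pos_local) (use F that rho in auto)
  have mpos: "m > 0"
    unfolding m_def by (subst Min_gr_iff) (use F Fne qpos in auto)
  have "prob {\<omega> \<in> space M. X 0 \<omega> \<in> L \<inter> ball x \<rho>} \<ge> m" if x: "x \<in> L" for x
  proof -
    obtain y where y: "y \<in> F" "x \<in> ball y (\<rho> / 2)" using F(3) x by auto
    have bsub: "ball y (\<rho> / 2) \<subseteq> ball x \<rho>"
    proof
      fix z assume "z \<in> ball y (\<rho> / 2)"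
      then have "dist y z < \<rho> / 2" by simp
      moreover have "dist x y < \<rho> / 2" using y(2) by (simp add: dist_commute)
      ultimately show "z \<in> ball x \<rho>" using dist_triangle[of x z y] by simp
    qed
    have "m \<le> q y" unfolding m_def using F(2) y(1) by simp
    also have "q y \<le> prob {\<omega> \<in> space M. X 0 \<omega> \<in> L \<inter> ball x \<rho>}"
      unfolding q_def by (rule finite_measure_mono) (use bsub in auto)
    finally show ?thesis .
  qed
  then show ?thesis using mpos by blast
qed

lemma p_pos: "p > 0"
proof -
  obtain x where x: "x \<in> L" using Lt_ne unfolding L_def by auto
  have "0 < prob {\<omega> \<in> space M. X 0 \<omega> \<in> L \<inter> ball x 1}" by (rule prob_pos_local[OF x]) simp
  also have "\<dots> \<le> p" unfolding p_def by (rule finite_measure_mono) auto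
  finally show ?thesis .
qed

end


context sdata
begin

lemma pointwise:
  fixes fhat :: "nat \<Rightarrow> 'b \<Rightarrow> 'a \<Rightarrow> real" and \<epsilon> :: "nat \<Rightarrow> real"
  assumes eps_lim: "\<epsilon> \<longlonglongrightarrow> 0"
    and Om: "AE \<omega> in M. eventually (\<lambda>n. \<forall>x. \<bar>fhat n \<omega> x - f x\<bar> \<le> \<epsilon> n) sequentially"
    and g[measurable]: "g \<in> borel_measurable borel" and gB: "\<And>y. \<bar>g y\<bar> \<le> B"
  shows "AE \<omega> in M. (\<lambda>n. (\<Sum>j\<in>Jn fhat X t n \<omega>. g (X j \<omega>)) / real (card (Jn fhat X t n \<omega>)))
           \<longlonglongrightarrow> expectation (\<lambda>\<omega>. indicator L (X 0 \<omega>) * g (X 0 \<omega>)) / p"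
proof -
  have ind_bd: "\<bar>indicator A y :: real\<bar> \<le> 1" for A y by (simp add: indicator_def)
  have A1: "AE \<omega> in M. \<forall>m. (\<lambda>n. (\<Sum>j<n. indicator (Bd m) (X j \<omega>)) / real n)
               \<longlonglongrightarrow> prob {\<omega> \<in> space M. X 0 \<omega> \<in> Bd m}"
  proof (subst AE_all_countable, intro allI)
    fix m
    show "AE \<omega> in M. (\<lambda>n. (\<Sum>j<n. indicator (Bd m) (X j \<omega>)) / real n) \<longlonglongrightarrow> prob {\<omega> \<in> space M. X 0 \<omega> \<in> Bd m}"
      using slln_g[of "indicator (Bd m)" 1] ind_bd exp_ind[of "Bd m"] by simp
  qed
  have A2: "AE \<omega> in M. (\<lambda>n. (\<Sum>j<n. indicator L (X j \<omega>)) / real n) \<longlonglongrightarrow> p"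
    using slln_g[of "indicator L" 1] ind_bd exp_ind[of L] unfolding p_def by simp
  have gB': "\<bar>indicator L y * g y\<bar> \<le> B" for y
    using gB[of y] order_trans[OF abs_ge_zero gB[of y]] by (simp add: indicator_def)
  have A3: "AE \<omega> in M. (\<lambda>n. (\<Sum>j<n. indicator L (X j \<omega>) * g (X j \<omega>)) / real n)
              \<longlonglongrightarrow> expectation (\<lambda>\<omega>. indicator L (X 0 \<omega>) * g (X 0 \<omega>))"
    using slln_g[of "\<lambda>y. indicator L y * g y" B] gB' by simp
  have p0: "p \<noteq> 0" using p_pos by simp
  show ?thesis
    using A1 A2 A3 Om
  proof eventually_elim
    case (elim \<omega>)
    note band = elim(1)[rule_format]
    show ?case
    proof (rule core_ratio[where l="\<lambda>j. indicator L (X j \<omega>)" and bm="\<lambda>m j. indicator (Bd m) (X j \<omega>)"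
          and P="\<lambda>m. prob {\<omega> \<in> space M. X 0 \<omega> \<in> Bd m}" and B=B])
      show "Jn fhat X t n \<omega> \<subseteq> {..<n}" for n unfolding Jn_def by auto
      show "\<bar>g (X j \<omega>)\<bar> \<le> B" for j by (rule gB)
      show "indicator L (X j \<omega>) = (0::real) \<or> indicator L (X j \<omega>) = (1::real)" for j
        by (simp add: indicator_def)
      show "indicator (Bd m) (X j \<omega>) = (0::real) \<or> indicator (Bd m) (X j \<omega>) = (1::real)" for m j
        by (simp add: indicator_def)
      show "(\<lambda>m. prob {\<omega> \<in> space M. X 0 \<omega> \<in> Bd m}) \<longlonglongrightarrow> 0" by (rule band_lim)
      show "(\<lambda>n. (\<Sum>j<n. indicator (Bd m) (X j \<omega>)) / real n) \<longlonglongrightarrow> prob {\<omega> \<in> space M. X 0 \<omega> \<in> Bd m}" for m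
        by (rule band)
      show "(\<lambda>n. (\<Sum>j<n. indicator L (X j \<omega>) * g (X j \<omega>)) / real n)
              \<longlonglongrightarrow> expectation (\<lambda>\<omega>. indicator L (X 0 \<omega>) * g (X 0 \<omega>))" by (rule elim(3))
      show "(\<lambda>n. (\<Sum>j<n. indicator L (X j \<omega>)) / real n) \<longlonglongrightarrow> p" by (rule elim(2))
      show "p \<noteq> 0" by (rule p0)
      fix m :: nat
      have "eventually (\<lambda>n. \<epsilon> n < 1 / real (Suc m)) sequentially"
        by (rule order_tendstoD(2)[OF eps_lim]) simp
      then show "eventually (\<lambda>n. \<forall>j<n. (j \<in> Jn fhat X t n \<omega>) \<noteq> (indicator L (X j \<omega>) = (1::real))
                  \<longrightarrow> indicator (Bd m) (X j \<omega>) = (1::real)) sequentially"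
        using elim(4)
      proof eventually_elim
        case (elim n)
        show ?case
        proof (intro allI impI)
          fix j assume jn: "j < n" and mis: "(j \<in> Jn fhat X t n \<omega>) \<noteq> (indicator L (X j \<omega>) = (1::real))"
          have cl: "\<bar>fhat n \<omega> (X j \<omega>) - f (X j \<omega>)\<bar> \<le> \<epsilon> n" using elim(2) by blast
          have "\<bar>f (X j \<omega>) - t\<bar> \<le> \<epsilon> n"
          proof (cases "t \<le> fhat n \<omega> (X j \<omega>)")
            case True
            then have "j \<in> Jn fhat X t n \<omega>" using jn unfolding Jn_def by simp
            then have "X j \<omega> \<notin> L" using mis by (simp add: indicator_def split: if_splits)
            then have "f (X j \<omega>) < t" unfolding L_def superlevel_def by simp
            then show ?thesis using True cl by linarith
          next
            case False
            then have "j \<notin> Jn fhat X t n \<omega>" unfolding Jn_def by simp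
            then have "X j \<omega> \<in> L" using mis by (simp add: indicator_def split: if_splits)
            then have "f (X j \<omega>) \<ge> t" unfolding L_def superlevel_def by simp
            then show ?thesis using False cl by linarith
          qed
          then have "X j \<omega> \<in> Bd m" using elim(1) unfolding Bd_def by simp
          then show "indicator (Bd m) (X j \<omega>) = (1::real)" by simp
        qed
      qed
    qed
  qed
qed

end


context sdata
begin

definition "Gn fhat \<psi> n \<omega> z =
  (\<Sum>j\<in>Jn fhat X t n \<omega>. \<psi> (X j \<omega> - z)) / real (card (Jn fhat X t n \<omega>))"
definition "Gl \<psi> z = expectation (\<lambda>\<omega>. indicator L (X 0 \<omega>) * \<psi> (X 0 \<omega> - z)) / p"

lemma Gn_equi:
  assumes "\<And>j. j \<in> Jn fhat X t n \<omega> \<Longrightarrow> \<bar>\<psi> (X j \<omega> - z) - \<psi> (X j \<omega> - q)\<bar> \<le> e" and e: "e \<ge> 0"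
  shows "\<bar>Gn fhat \<psi> n \<omega> z - Gn fhat \<psi> n \<omega> q\<bar> \<le> e"
proof -
  define J where "J = Jn fhat X t n \<omega>"
  have fin: "finite J" unfolding J_def Jn_def by simp
  show ?thesis
  proof (cases "J = {}")
    case True then show ?thesis using e unfolding Gn_def J_def[symmetric] by simp
  next
    case False
    then have c: "real (card J) > 0" using fin by (simp add: card_gt_0_iff)
    have "\<bar>Gn fhat \<psi> n \<omega> z - Gn fhat \<psi> n \<omega> q\<bar> = \<bar>\<Sum>j\<in>J. \<psi> (X j \<omega> - z) - \<psi> (X j \<omega> - q)\<bar> / real (card J)"
      unfolding Gn_def J_def[symmetric] using c
      by (simp add: sum_subtractf diff_divide_distrib[symmetric] abs_divide)
    also have "\<dots> \<le> (\<Sum>j\<in>J. \<bar>\<psi> (X j \<omega> - z) - \<psi> (X j \<omega> - q)\<bar>) / real (card J)"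
      using c by (intro divide_right_mono sum_abs) simp
    also have "\<dots> \<le> (\<Sum>j\<in>J. e) / real (card J)"
      using c assms(1) unfolding J_def by (intro divide_right_mono sum_mono) auto
    also have "\<dots> = e" using c by simp
    finally show ?thesis .
  qed
qed

lemma Gl_equi:
  assumes psi[measurable]: "\<psi> \<in> borel_measurable borel" and psiB: "\<And>y. \<bar>\<psi> y\<bar> \<le> B"
    and close: "\<And>y. \<bar>\<psi> (y - z) - \<psi> (y - q)\<bar> \<le> e"
  shows "\<bar>Gl \<psi> z - Gl \<psi> q\<bar> \<le> e"
proof -
  have int: "integrable M (\<lambda>\<omega>. indicator L (X 0 \<omega>) * \<psi> (X 0 \<omega> - w))" for w
    by (rule integrable_const_bound[where B=B])
       (auto intro!: AE_I2 simp: indicator_def psiB order_trans[OF abs_ge_zero psiB])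
  have int2: "integrable M (\<lambda>\<omega>. e * indicator L (X 0 \<omega>))"
    by (rule integrable_const_bound[where B="\<bar>e\<bar>"]) (auto intro!: AE_I2 simp: indicator_def)
  have e: "e \<ge> 0" using close[of z] by (meson abs_ge_zero order_trans)
  have "\<bar>expectation (\<lambda>\<omega>. indicator L (X 0 \<omega>) * \<psi> (X 0 \<omega> - z)) - expectation (\<lambda>\<omega>. indicator L (X 0 \<omega>) * \<psi> (X 0 \<omega> - q))\<bar>
      = \<bar>expectation (\<lambda>\<omega>. indicator L (X 0 \<omega>) * \<psi> (X 0 \<omega> - z) - indicator L (X 0 \<omega>) * \<psi> (X 0 \<omega> - q))\<bar>"
    using int by simp
  also have "\<dots> \<le> expectation (\<lambda>\<omega>. \<bar>indicator L (X 0 \<omega>) * \<psi> (X 0 \<omega> - z) - indicator L (X 0 \<omega>) * \<psi> (X 0 \<omega> - q)\<bar>)"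
    by (rule integral_abs_bound)
  also have "\<dots> \<le> expectation (\<lambda>\<omega>. e * indicator L (X 0 \<omega>))"
  proof (rule integral_mono)
    show "integrable M (\<lambda>\<omega>. \<bar>indicator L (X 0 \<omega>) * \<psi> (X 0 \<omega> - z) - indicator L (X 0 \<omega>) * \<psi> (X 0 \<omega> - q)\<bar>)"
      using Bochner_Integration.integrable_diff[OF int[of z] int[of q]] by (rule Bochner_Integration.integrable_abs)
    show "integrable M (\<lambda>\<omega>. e * indicator L (X 0 \<omega>))" by (rule int2)
    fix \<omega> show "\<bar>indicator L (X 0 \<omega>) * \<psi> (X 0 \<omega> - z) - indicator L (X 0 \<omega>) * \<psi> (X 0 \<omega> - q)\<bar> \<le> e * indicator L (X 0 \<omega>)"
      using close[of "X 0 \<omega>"] e by (simp add: indicator_def)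
  qed
  also have "\<dots> = e * p" using exp_ind[of L] unfolding p_def by simp
  finally have "\<bar>expectation (\<lambda>\<omega>. indicator L (X 0 \<omega>) * \<psi> (X 0 \<omega> - z)) - expectation (\<lambda>\<omega>. indicator L (X 0 \<omega>) * \<psi> (X 0 \<omega> - q))\<bar> \<le> e * p" .
  then show ?thesis using p_pos unfolding Gl_def
    by (simp add: diff_divide_distrib[symmetric] abs_divide field_simps)
qed

lemma uniform:
  fixes fhat :: "nat \<Rightarrow> 'b \<Rightarrow> 'a \<Rightarrow> real" and \<epsilon> :: "nat \<Rightarrow> real"
  assumes eps_lim: "\<epsilon> \<longlonglongrightarrow> 0"
    and Om: "AE \<omega> in M. eventually (\<lambda>n. \<forall>x. \<bar>fhat n \<omega> x - f x\<bar> \<le> \<epsilon> n) sequentially"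
    and psi_cont: "continuous_on UNIV \<psi>" and psi_uc: "uniformly_continuous_on UNIV \<psi>"
    and psiB: "\<And>y. \<bar>\<psi> y\<bar> \<le> B"
  shows "AE \<omega> in M. \<forall>C. compact C \<longrightarrow> (\<forall>e>0. eventually (\<lambda>n. \<forall>z\<in>C. \<bar>Gn fhat \<psi> n \<omega> z - Gl \<psi> z\<bar> \<le> e) sequentially)"
proof -
  have psim[measurable]: "\<psi> \<in> borel_measurable borel" by (rule borel_measurable_continuous_onI[OF psi_cont])
  obtain Q :: "'a set" where Q: "countable Q" "\<And>U. open U \<Longrightarrow> U \<noteq> {} \<Longrightarrow> \<exists>d\<in>Q. d \<in> U"
    using countable_dense_setE by auto
  have "AE \<omega> in M. \<forall>q\<in>Q. (\<lambda>n. Gn fhat \<psi> n \<omega> q) \<longlonglongrightarrow> Gl \<psi> q"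
  proof (rule AE_ball_countable')
    fix q assume "q \<in> Q"
    have gm: "(\<lambda>y. \<psi> (y - q)) \<in> borel_measurable borel" by measurable
    show "AE \<omega> in M. (\<lambda>n. Gn fhat \<psi> n \<omega> q) \<longlonglongrightarrow> Gl \<psi> q"
      using pointwise[OF eps_lim Om gm psiB] unfolding Gn_def Gl_def .
  qed (rule Q(1))
  then show ?thesis
  proof (rule AE_mp, intro AE_I2 impI)
    fix \<omega> assume "\<omega> \<in> space M" and conv: "\<forall>q\<in>Q. (\<lambda>n. Gn fhat \<psi> n \<omega> q) \<longlonglongrightarrow> Gl \<psi> q"
    show "\<forall>C. compact C \<longrightarrow> (\<forall>e>0. eventually (\<lambda>n. \<forall>z\<in>C. \<bar>Gn fhat \<psi> n \<omega> z - Gl \<psi> z\<bar> \<le> e) sequentially)"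
    proof (intro allI impI)
      fix C :: "'a set" and e :: real
      assume cC: "compact C" and e: "e > 0"
      have e3: "e / 3 > 0" using e by simp
      obtain \<delta> where \<delta>: "\<delta> > 0" "\<forall>x\<in>UNIV. \<forall>x'\<in>UNIV. dist x' x < \<delta> \<longrightarrow> dist (\<psi> x') (\<psi> x) < e / 3"
        using psi_uc e3 unfolding uniformly_continuous_on_def by blast
      have close: "\<bar>\<psi> (y - z) - \<psi> (y - q)\<bar> \<le> e / 3" if "dist z q < \<delta>" for y z q
      proof -
        have "dist (y - z) (y - q) < \<delta>" using that by (simp add: dist_norm norm_minus_commute)
        then have "dist (\<psi> (y - z)) (\<psi> (y - q)) < e / 3" using \<delta>(2) by blast
        then show ?thesis by (simp add: dist_real_def)
      qed
      have cover: "C \<subseteq> (\<Union>q\<in>Q. ball q \<delta>)"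
      proof
        fix z assume "z \<in> C"
        obtain q where "q \<in> Q" "q \<in> ball z \<delta>" using Q(2)[of "ball z \<delta>"] \<delta>(1) by auto
        then show "z \<in> (\<Union>q\<in>Q. ball q \<delta>)" by (auto simp: dist_commute)
      qed
      obtain F where F: "F \<subseteq> Q" "finite F" "C \<subseteq> (\<Union>q\<in>F. ball q \<delta>)"
        by (rule compactE_image[OF cC, of Q "\<lambda>q. ball q \<delta>"]) (use cover in auto)
      have "eventually (\<lambda>n. \<forall>q\<in>F. \<bar>Gn fhat \<psi> n \<omega> q - Gl \<psi> q\<bar> < e / 3) sequentially"
      proof (rule eventually_ball_finite[OF F(2)], intro ballI)
        fix q assume "q \<in> F"
        then have "(\<lambda>n. Gn fhat \<psi> n \<omega> q) \<longlonglongrightarrow> Gl \<psi> q" using conv F(1) by auto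
        then show "eventually (\<lambda>n. \<bar>Gn fhat \<psi> n \<omega> q - Gl \<psi> q\<bar> < e / 3) sequentially"
          using e3 unfolding tendsto_iff dist_real_def by blast
      qed
      then show "eventually (\<lambda>n. \<forall>z\<in>C. \<bar>Gn fhat \<psi> n \<omega> z - Gl \<psi> z\<bar> \<le> e) sequentially"
      proof eventually_elim
        case (elim n)
        show ?case
        proof
          fix z assume "z \<in> C"
          then obtain q where q: "q \<in> F" "dist z q < \<delta>" using F(3) by (auto simp: dist_commute)
          have a: "\<bar>Gn fhat \<psi> n \<omega> z - Gn fhat \<psi> n \<omega> q\<bar> \<le> e / 3"
            by (rule Gn_equi) (use close[OF q(2)] e in auto)
          have b: "\<bar>Gl \<psi> z - Gl \<psi> q\<bar> \<le> e / 3"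
            by (rule Gl_equi[OF psim psiB close[OF q(2)]])
          have c: "\<bar>Gn fhat \<psi> n \<omega> q - Gl \<psi> q\<bar> < e / 3" using elim q(1) by blast
          show "\<bar>Gn fhat \<psi> n \<omega> z - Gl \<psi> z\<bar> \<le> e" using a b c by linarith
        qed
      qed
    qed
  qed
qed

end


lemma kd_repr:
  fixes L :: "'a::euclidean_space \<Rightarrow>\<^sub>L real"
  shows "L v = (\<Sum>b\<in>Basis. (v \<bullet> b) * L b)"
proof -
  have "L v = L (\<Sum>b\<in>Basis. (v \<bullet> b) *\<^sub>R b)" by (simp add: euclidean_representation)
  also have "\<dots> = (\<Sum>b\<in>Basis. (v \<bullet> b) * L b)" by (simp add: blinfun.sum_right blinfun.scaleR_right)
  finally show ?thesis .
qed

locale full = sdata M X f Df t + kern k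
  for M :: "'b measure" and X :: "nat \<Rightarrow> 'b \<Rightarrow> 'a::euclidean_space" and f Df t and k :: "'a \<Rightarrow> real" +
  fixes h :: real
  assumes h_pos: "h > 0" and k_low: "\<exists>c>0. \<forall>x\<in>cball 0 (1/2). k x \<ge> c"
begin

definition "psi0 u = k (u /\<^sub>R h)"
definition "psib b u = kd (u /\<^sub>R h) b / h"

lemma psi0_cont: "continuous_on UNIV psi0"
  unfolding psi0_def by (intro continuous_on_compose2[OF k_cont] continuous_intros) auto

lemma psib_cont: "continuous_on UNIV (psib b)"
  unfolding psib_def using h_pos by (intro continuous_on_compose2[OF kd_cont] continuous_intros) auto

lemma psi0_bdd: "\<exists>B>0. \<forall>u. \<bar>psi0 u\<bar> \<le> B"
  using k_bdd unfolding psi0_def by blast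

lemma psib_bdd: "\<exists>B>0. \<forall>u. \<bar>psib b u\<bar> \<le> B"
proof -
  obtain B where B: "B > 0" "\<And>x. norm (kd x) \<le> B" using kd_bdd by blast
  have "\<bar>psib b u\<bar> \<le> B * norm b / h" for u
  proof -
    have "\<bar>kd (u /\<^sub>R h) b\<bar> \<le> norm (kd (u /\<^sub>R h)) * norm b" by (metis norm_blinfun real_norm_def)
    also have "\<dots> \<le> B * norm b" using B by (intro mult_right_mono) auto
    finally show ?thesis unfolding psib_def using h_pos by (simp add: abs_divide divide_right_mono)
  qed
  moreover have "B * norm b / h + 1 > 0" using B h_pos by (simp add: add_nonneg_pos)
  ultimately show ?thesis
    by (intro exI[of _ "B * norm b / h + 1"]) (auto intro: order_trans[OF _ less_imp_le[OF less_add_one]])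
qed

lemma uc_scale:
  fixes g :: "'a \<Rightarrow> real"
  assumes "uniformly_continuous_on UNIV g"
  shows "uniformly_continuous_on UNIV (\<lambda>u::'a. g (u /\<^sub>R h))"
  unfolding uniformly_continuous_on_def
proof (intro allI impI)
  fix e :: real assume e: "e > 0"
  obtain d where d: "d > 0" "\<forall>x\<in>UNIV. \<forall>x'\<in>UNIV. dist x' x < d \<longrightarrow> dist (g x') (g x) < e"
    using assms e unfolding uniformly_continuous_on_def by blast
  show "\<exists>d>0. \<forall>x\<in>UNIV. \<forall>x'\<in>UNIV. dist x' x < d \<longrightarrow> dist (g (x' /\<^sub>R h)) (g (x /\<^sub>R h)) < e"
  proof (intro exI[of _ "d * h"] conjI ballI impI)
    fix x x' :: 'a assume "dist x' x < d * h"
    then have lt: "norm (x' - x) < d * h" by (simp add: dist_norm)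
    have "x' /\<^sub>R h - x /\<^sub>R h = inverse h *\<^sub>R (x' - x)" by (simp add: scaleR_diff_right)
    then have "dist (x' /\<^sub>R h) (x /\<^sub>R h) = norm (x' - x) / h" using h_pos
      by (simp add: dist_norm divide_inverse mult.commute)
    also have "\<dots> < d" using lt h_pos by (simp add: divide_less_eq)
    finally show "dist (g (x' /\<^sub>R h)) (g (x /\<^sub>R h)) < e" using d by blast
  next
    show "d * h > 0" using d(1) h_pos by simp
  qed
qed

lemma psi0_uc: "uniformly_continuous_on UNIV psi0"
  unfolding psi0_def by (rule uc_scale[OF k_uc])

lemma psib_uc: "uniformly_continuous_on UNIV (psib b)"
proof -
  have "uniformly_continuous_on UNIV (\<lambda>x. kd x b / h)"
    unfolding uniformly_continuous_on_def
  proof (intro allI impI)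
    fix e :: real assume e: "e > 0"
    define e' where "e' = e * h / (norm b + 1)"
    have e': "e' > 0" unfolding e'_def using e h_pos by (simp add: add_nonneg_pos)
    obtain d where d: "d > 0" "\<forall>x\<in>UNIV. \<forall>x'\<in>UNIV. dist x' x < d \<longrightarrow> dist (kd x') (kd x) < e'"
      using kd_uc e' unfolding uniformly_continuous_on_def by blast
    show "\<exists>d>0. \<forall>x\<in>UNIV. \<forall>x'\<in>UNIV. dist x' x < d \<longrightarrow> dist (kd x' b / h) (kd x b / h) < e"
    proof (intro exI[of _ d] conjI ballI impI)
      fix x x' :: 'a assume "dist x' x < d"
      then have n: "norm (kd x' - kd x) < e'" using d by (simp add: dist_norm)
      have "\<bar>kd x' b - kd x b\<bar> = \<bar>(kd x' - kd x) b\<bar>" by (simp add: blinfun.diff_left)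
      also have "\<dots> \<le> norm (kd x' - kd x) * norm b" by (metis norm_blinfun real_norm_def)
      also have "\<dots> \<le> e' * norm b" using n by (intro mult_right_mono) auto
      also have "\<dots> < e' * (norm b + 1)" using e' by simp
      also have "\<dots> = e * h"
      proof -
        have "norm b + 1 \<noteq> 0" using norm_ge_zero[of b] by linarith
        then show ?thesis unfolding e'_def by simp
      qed
      finally have "\<bar>kd x' b - kd x b\<bar> < e * h" .
      then show "dist (kd x' b / h) (kd x b / h) < e" using h_pos
        by (simp add: dist_real_def diff_divide_distrib[symmetric] abs_divide field_simps)
    qed (rule d(1))
  qed
  then show ?thesis unfolding psib_def by (rule uc_scale)
qed

end


context full
begin

lemma Kh_lim_eq: "Kh_lim M X f t k h z = Gl psi0 z"
  unfolding Kh_lim_def Gl_def kh_def psi0_def L_def p_def by simp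

lemma Knh_eq: "Knh fhat X t k h n \<omega> z = Gn fhat psi0 n \<omega> z"
proof -
  have "(\<Sum>j\<in>Jn fhat X t n \<omega>. indicator (superlevel (fhat n \<omega>) t) (X j \<omega>) * kh k h (X j \<omega> - z))
      = (\<Sum>j\<in>Jn fhat X t n \<omega>. psi0 (X j \<omega> - z))"
    by (rule sum.cong) (auto simp: Jn_def superlevel_def kh_def psi0_def)
  then show ?thesis unfolding Knh_def Gn_def by simp
qed

lemma integrable_ind:
  fixes g :: "'a \<Rightarrow> real"
  assumes [measurable]: "g \<in> borel_measurable borel" and gB: "\<And>y. \<bar>g y\<bar> \<le> B"
  shows "integrable M (\<lambda>\<omega>. indicator L (X 0 \<omega>) * g (X 0 \<omega>))"
  by (rule integrable_const_bound[where B=B])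
     (auto intro!: AE_I2 simp: indicator_def gB order_trans[OF abs_ge_zero gB])

lemma Gl_bound:
  fixes g :: "'a \<Rightarrow> real"
  assumes [measurable]: "g \<in> borel_measurable borel" and gB: "\<And>y. \<bar>g y\<bar> \<le> B"
  shows "\<bar>Gl g z\<bar> \<le> B"
proof -
  have B0: "B \<ge> 0" using order_trans[OF abs_ge_zero gB] .
  have gm: "(\<lambda>y. g (y - z)) \<in> borel_measurable borel" by measurable
  have "\<bar>expectation (\<lambda>\<omega>. indicator L (X 0 \<omega>) * g (X 0 \<omega> - z))\<bar>
      \<le> expectation (\<lambda>\<omega>. \<bar>indicator L (X 0 \<omega>) * g (X 0 \<omega> - z)\<bar>)" by (rule integral_abs_bound)
  also have "\<dots> \<le> expectation (\<lambda>\<omega>. B * indicator L (X 0 \<omega>))"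
  proof (rule integral_mono)
    show "integrable M (\<lambda>\<omega>. \<bar>indicator L (X 0 \<omega>) * g (X 0 \<omega> - z)\<bar>)"
      by (rule Bochner_Integration.integrable_abs[OF integrable_ind[OF gm gB]])
    show "integrable M (\<lambda>\<omega>. B * indicator L (X 0 \<omega>))"
      by (rule integrable_const_bound[where B=B]) (auto intro!: AE_I2 simp: indicator_def B0)
    fix \<omega> show "\<bar>indicator L (X 0 \<omega>) * g (X 0 \<omega> - z)\<bar> \<le> B * indicator L (X 0 \<omega>)"
      using gB[of "X 0 \<omega> - z"] by (simp add: indicator_def)
  qed
  also have "\<dots> = B * p" using exp_ind[of L] unfolding p_def by simp
  finally show ?thesis using p_pos unfolding Gl_def by (simp add: abs_divide field_simps)
qed

lemma Gn_bound:
  fixes g :: "'a \<Rightarrow> real"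
  assumes gB: "\<And>y. \<bar>g y\<bar> \<le> B"
  shows "\<bar>Gn fhat g n \<omega> z\<bar> \<le> B"
proof -
  have B0: "B \<ge> 0" using order_trans[OF abs_ge_zero gB] .
  define J where "J = Jn fhat X t n \<omega>"
  have fin: "finite J" unfolding J_def Jn_def by simp
  show ?thesis
  proof (cases "J = {}")
    case True then show ?thesis using B0 unfolding Gn_def J_def[symmetric] by simp
  next
    case False
    then have c: "real (card J) > 0" using fin by (simp add: card_gt_0_iff)
    have "\<bar>\<Sum>j\<in>J. g (X j \<omega> - z)\<bar> \<le> (\<Sum>j\<in>J. B)"
      using gB by (intro order_trans[OF sum_abs] sum_mono) auto
    then have "\<bar>\<Sum>j\<in>J. g (X j \<omega> - z)\<bar> \<le> real (card J) * B" by simp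
    then show ?thesis using c unfolding Gn_def J_def[symmetric] by (simp add: abs_divide field_simps)
  qed
qed

lemma psi0_deriv:
  "((\<lambda>z. psi0 (y - z)) has_derivative (\<lambda>v. - (\<Sum>b\<in>Basis. (v \<bullet> b) * psib b (y - z)))) (at z)"
proof -
  have inner: "((\<lambda>z. (y - z) /\<^sub>R h) has_derivative (\<lambda>v. - (v /\<^sub>R h))) (at z)"
    by (auto intro!: derivative_eq_intros)
  have "((\<lambda>z. k ((y - z) /\<^sub>R h)) has_derivative (\<lambda>v. kd ((y - z) /\<^sub>R h) (- (v /\<^sub>R h)))) (at z)"
    by (rule has_derivative_compose[OF inner kd])
  moreover have "kd ((y - z) /\<^sub>R h) (- (v /\<^sub>R h)) = - (\<Sum>b\<in>Basis. (v \<bullet> b) * psib b (y - z))" for v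
  proof -
    have "kd ((y - z) /\<^sub>R h) (- (v /\<^sub>R h)) = - kd ((y - z) /\<^sub>R h) (v /\<^sub>R h)"
      by (simp add: blinfun.minus_right)
    also have "kd ((y - z) /\<^sub>R h) (v /\<^sub>R h) = (\<Sum>b\<in>Basis. ((v /\<^sub>R h) \<bullet> b) * kd ((y - z) /\<^sub>R h) b)"
      by (rule kd_repr)
    also have "\<dots> = (\<Sum>b\<in>Basis. (v \<bullet> b) * psib b (y - z))"
      unfolding psib_def by (rule sum.cong) (simp_all add: field_simps)
    finally show ?thesis .
  qed
  ultimately show ?thesis unfolding psi0_def by simp
qed

lemma Gn_deriv:
  "(Gn fhat psi0 n \<omega> has_derivative (\<lambda>v. - (\<Sum>b\<in>Basis. (v \<bullet> b) * Gn fhat (psib b) n \<omega> z))) (at z)"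
proof -
  define J where "J = Jn fhat X t n \<omega>"
  define c where "c = real (card J)"
  have "((\<lambda>z. \<Sum>j\<in>J. psi0 (X j \<omega> - z)) has_derivative
      (\<lambda>v. \<Sum>j\<in>J. - (\<Sum>b\<in>Basis. (v \<bullet> b) * psib b (X j \<omega> - z)))) (at z)"
    by (rule has_derivative_sum) (rule psi0_deriv)
  then have "((\<lambda>z. (\<Sum>j\<in>J. psi0 (X j \<omega> - z)) / c) has_derivative
      (\<lambda>v. (\<Sum>j\<in>J. - (\<Sum>b\<in>Basis. (v \<bullet> b) * psib b (X j \<omega> - z))) / c)) (at z)"
    by (rule bounded_linear.has_derivative[OF bounded_linear_divide[of c]])
  moreover have "(\<Sum>j\<in>J. - (\<Sum>b\<in>Basis. (v \<bullet> b) * psib b (X j \<omega> - z))) / c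
      = - (\<Sum>b\<in>Basis. (v \<bullet> b) * ((\<Sum>j\<in>J. psib b (X j \<omega> - z)) / c))" for v
    by (simp add: sum_negf sum_divide_distrib sum_distrib_left sum.swap[of _ J] mult.assoc)
  ultimately show ?thesis unfolding Gn_def J_def[symmetric] c_def[symmetric] by simp
qed

end


context full
begin

lemma psi0_meas[measurable]: "psi0 \<in> borel_measurable borel"
  by (rule borel_measurable_continuous_onI[OF psi0_cont])

lemma psib_meas[measurable]: "psib b \<in> borel_measurable borel"
  by (rule borel_measurable_continuous_onI[OF psib_cont])

lemma int0: "integrable M (\<lambda>\<omega>. indicator L (X 0 \<omega>) * psi0 (X 0 \<omega> - w))"
proof -
  obtain B where "\<And>u. \<bar>psi0 u\<bar> \<le> B" using psi0_bdd by blast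
  then show ?thesis by (intro integrable_ind[of _ B]) auto
qed

lemma intb: "integrable M (\<lambda>\<omega>. indicator L (X 0 \<omega>) * psib b (X 0 \<omega> - w))"
proof -
  obtain B where "\<And>u. \<bar>psib b u\<bar> \<le> B" using psib_bdd by blast
  then show ?thesis by (intro integrable_ind[of _ B]) auto
qed

lemma pointwise_taylor:
  assumes e: "e > 0"
  shows "\<exists>d>0. \<forall>v x. norm v < d \<longrightarrow>
    \<bar>psi0 (x - (z + v)) - psi0 (x - z) + (\<Sum>b\<in>Basis. (v \<bullet> b) * psib b (x - z))\<bar> \<le> e * norm v"
proof -
  obtain \<delta> where \<delta>: "\<delta> > 0" "\<And>w u. norm u < \<delta> \<Longrightarrow> \<bar>k (w + u) - k w - kd w u\<bar> \<le> (e * h) * norm u"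
    using k_taylor[of "e * h"] e h_pos by auto
  show ?thesis
  proof (intro exI[of _ "\<delta> * h"] conjI allI impI)
    show "\<delta> * h > 0" using \<delta>(1) h_pos by simp
    fix v x :: 'a assume v: "norm v < \<delta> * h"
    define w where "w = (x - z) /\<^sub>R h"
    define u where "u = - (v /\<^sub>R h)"
    have nu: "norm u = norm v / h" unfolding u_def using h_pos by (simp add: divide_inverse mult.commute)
    have nu2: "norm u < \<delta>" unfolding nu using v h_pos by (simp add: divide_less_eq)
    have xy: "(x - (z + v)) /\<^sub>R h = w + u" unfolding w_def u_def by (simp add: algebra_simps)
    have sb: "(\<Sum>b\<in>Basis. (v \<bullet> b) * psib b (x - z)) = - kd w u"
    proof -
      have "(\<Sum>b\<in>Basis. (v \<bullet> b) * psib b (x - z)) = (\<Sum>b\<in>Basis. ((v /\<^sub>R h) \<bullet> b) * kd w b)"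
        unfolding psib_def w_def by (rule sum.cong) (simp_all add: field_simps)
      also have "\<dots> = kd w (v /\<^sub>R h)" by (rule kd_repr[symmetric])
      also have "\<dots> = - kd w u" unfolding u_def by (simp add: blinfun.minus_right)
      finally show ?thesis .
    qed
    have "\<bar>psi0 (x - (z + v)) - psi0 (x - z) + (\<Sum>b\<in>Basis. (v \<bullet> b) * psib b (x - z))\<bar>
        = \<bar>k (w + u) - k w - kd w u\<bar>"
      unfolding psi0_def xy sb w_def[symmetric] by simp
    also have "\<dots> \<le> (e * h) * norm u" by (rule \<delta>(2)[OF nu2])
    also have "\<dots> = e * norm v" unfolding nu using h_pos by simp
    finally show "\<bar>psi0 (x - (z + v)) - psi0 (x - z) + (\<Sum>b\<in>Basis. (v \<bullet> b) * psib b (x - z))\<bar> \<le> e * norm v" .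
  qed
qed

lemma Gl_deriv: "(Gl psi0 has_derivative (\<lambda>v. - (\<Sum>b\<in>Basis. (v \<bullet> b) * Gl (psib b) z))) (at z)"
  unfolding has_derivative_at_alt
proof (intro conjI allI impI)
  show "bounded_linear (\<lambda>v. - (\<Sum>b\<in>Basis. (v \<bullet> b) * Gl (psib b) z))"
    by (intro bounded_linear_minus bounded_linear_sum bounded_linear_mult_const bounded_linear_inner_left)
  fix e :: real assume e: "e > 0"
  obtain d where d: "d > 0" "\<And>v x. norm v < d \<Longrightarrow>
    \<bar>psi0 (x - (z + v)) - psi0 (x - z) + (\<Sum>b\<in>Basis. (v \<bullet> b) * psib b (x - z))\<bar> \<le> e * norm v"
    using pointwise_taylor[OF e, of z] by blast
  show "\<exists>d>0. \<forall>y. norm (y - z) < d \<longrightarrow>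
      norm (Gl psi0 y - Gl psi0 z - - (\<Sum>b\<in>Basis. ((y - z) \<bullet> b) * Gl (psib b) z)) \<le> e * norm (y - z)"
  proof (intro exI[of _ d] conjI allI impI)
    show "d > 0" by (rule d(1))
    fix y assume yz: "norm (y - z) < d"
    define v where "v = y - z"
    have y: "y = z + v" unfolding v_def by simp
    define H where "H \<omega> = indicator L (X 0 \<omega>) * (psi0 (X 0 \<omega> - (z + v)) - psi0 (X 0 \<omega> - z)
        + (\<Sum>b\<in>Basis. (v \<bullet> b) * psib b (X 0 \<omega> - z)))" for \<omega>
    define Eb where "Eb b = expectation (\<lambda>\<omega>. indicator L (X 0 \<omega>) * psib b (X 0 \<omega> - z))" for b
    have Hexp: "expectation H = expectation (\<lambda>\<omega>. indicator L (X 0 \<omega>) * psi0 (X 0 \<omega> - (z + v)))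
        - expectation (\<lambda>\<omega>. indicator L (X 0 \<omega>) * psi0 (X 0 \<omega> - z)) + (\<Sum>b\<in>Basis. (v \<bullet> b) * Eb b)"
    proof -
      have "expectation H = expectation (\<lambda>\<omega>. (indicator L (X 0 \<omega>) * psi0 (X 0 \<omega> - (z + v))
          - indicator L (X 0 \<omega>) * psi0 (X 0 \<omega> - z))
          + (\<Sum>b\<in>Basis. (v \<bullet> b) * (indicator L (X 0 \<omega>) * psib b (X 0 \<omega> - z))))"
        unfolding H_def by (rule Bochner_Integration.integral_cong) (simp_all add: algebra_simps sum_distrib_left)
      also have "\<dots> = expectation (\<lambda>\<omega>. indicator L (X 0 \<omega>) * psi0 (X 0 \<omega> - (z + v))
          - indicator L (X 0 \<omega>) * psi0 (X 0 \<omega> - z))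
          + expectation (\<lambda>\<omega>. \<Sum>b\<in>Basis. (v \<bullet> b) * (indicator L (X 0 \<omega>) * psib b (X 0 \<omega> - z)))"
        by (intro Bochner_Integration.integral_add Bochner_Integration.integrable_diff
            Bochner_Integration.integrable_sum Bochner_Integration.integrable_mult_right int0 intb)
      also have "expectation (\<lambda>\<omega>. indicator L (X 0 \<omega>) * psi0 (X 0 \<omega> - (z + v))
          - indicator L (X 0 \<omega>) * psi0 (X 0 \<omega> - z))
          = expectation (\<lambda>\<omega>. indicator L (X 0 \<omega>) * psi0 (X 0 \<omega> - (z + v)))
            - expectation (\<lambda>\<omega>. indicator L (X 0 \<omega>) * psi0 (X 0 \<omega> - z))"
        by (intro Bochner_Integration.integral_diff int0)
      also have "expectation (\<lambda>\<omega>. \<Sum>b\<in>Basis. (v \<bullet> b) * (indicator L (X 0 \<omega>) * psib b (X 0 \<omega> - z)))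
          = (\<Sum>b\<in>Basis. expectation (\<lambda>\<omega>. (v \<bullet> b) * (indicator L (X 0 \<omega>) * psib b (X 0 \<omega> - z))))"
        by (intro Bochner_Integration.integral_sum Bochner_Integration.integrable_mult_right intb)
      also have "\<dots> = (\<Sum>b\<in>Basis. (v \<bullet> b) * Eb b)"
        unfolding Eb_def by (rule sum.cong) simp_all
      finally show ?thesis .
    qed
    have intH: "integrable M H"
      unfolding H_def
      by (simp only: distrib_left right_diff_distrib sum_distrib_left mult.left_commute[of "indicator L (X 0 _)"])
         (intro Bochner_Integration.integrable_add Bochner_Integration.integrable_diff
            Bochner_Integration.integrable_sum Bochner_Integration.integrable_mult_right int0 intb)
    have "\<bar>expectation H\<bar> \<le> expectation (\<lambda>\<omega>. \<bar>H \<omega>\<bar>)" by (rule integral_abs_bound)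
    also have "\<dots> \<le> expectation (\<lambda>\<omega>. (e * norm v) * indicator L (X 0 \<omega>))"
    proof (rule integral_mono)
      show "integrable M (\<lambda>\<omega>. \<bar>H \<omega>\<bar>)" by (rule Bochner_Integration.integrable_abs[OF intH])
      show "integrable M (\<lambda>\<omega>. (e * norm v) * indicator L (X 0 \<omega>))"
        by (rule integrable_const_bound[where B="\<bar>e * norm v\<bar>"]) (auto intro!: AE_I2 simp: indicator_def)
      fix \<omega> show "\<bar>H \<omega>\<bar> \<le> (e * norm v) * indicator L (X 0 \<omega>)"
        unfolding H_def using d(2)[of v "X 0 \<omega>"] yz unfolding v_def by (simp add: indicator_def abs_mult)
    qed
    also have "\<dots> = (e * norm v) * p" using exp_ind[of L] unfolding p_def by simp
    finally have bound: "\<bar>expectation H\<bar> \<le> (e * norm v) * p" .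
    have "Gl psi0 y - Gl psi0 z - - (\<Sum>b\<in>Basis. ((y - z) \<bullet> b) * Gl (psib b) z) = expectation H / p"
      unfolding Hexp Gl_def y v_def[symmetric] Eb_def
      by (simp add: diff_divide_distrib add_divide_distrib sum_divide_distrib)
    then have "norm (Gl psi0 y - Gl psi0 z - - (\<Sum>b\<in>Basis. ((y - z) \<bullet> b) * Gl (psib b) z)) = \<bar>expectation H\<bar> / p"
      using p_pos by (simp add: abs_divide)
    also have "\<dots> \<le> e * norm v" using bound p_pos by (simp add: divide_le_eq)
    finally show "norm (Gl psi0 y - Gl psi0 z - - (\<Sum>b\<in>Basis. ((y - z) \<bullet> b) * Gl (psib b) z)) \<le> e * norm (y - z)"
      unfolding v_def .
  qed
qed

end


context full
begin

lemma Gl_pos: "\<exists>c>0. \<forall>z. (\<exists>x\<in>L. dist z x \<le> h / 4) \<longrightarrow> Gl psi0 z \<ge> c"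
proof -
  obtain c0 where c0: "c0 > 0" "\<And>x. x \<in> cball 0 (1/2) \<Longrightarrow> k x \<ge> c0" using k_low by blast
  obtain m where m: "m > 0" "\<And>x. x \<in> L \<Longrightarrow> prob {\<omega> \<in> space M. X 0 \<omega> \<in> L \<inter> ball x (h / 4)} \<ge> m"
    using prob_pos_unif[of "h / 4"] h_pos by auto
  have "Gl psi0 z \<ge> c0 * m / p" if H: "\<exists>x\<in>L. dist z x \<le> h / 4" for z
  proof -
    obtain x where x: "x \<in> L" "dist z x \<le> h / 4" using H by blast
    have bm[measurable]: "L \<inter> ball x (h / 4) \<in> sets borel" by simp
    have "c0 * m \<le> c0 * prob {\<omega> \<in> space M. X 0 \<omega> \<in> L \<inter> ball x (h / 4)}"
      using m(2)[OF x(1)] c0(1) by simp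
    also have "\<dots> = expectation (\<lambda>\<omega>. c0 * indicator (L \<inter> ball x (h / 4)) (X 0 \<omega>))"
      using exp_ind[OF bm] by simp
    also have "\<dots> \<le> expectation (\<lambda>\<omega>. indicator L (X 0 \<omega>) * psi0 (X 0 \<omega> - z))"
    proof (rule integral_mono)
      show "integrable M (\<lambda>\<omega>. c0 * indicator (L \<inter> ball x (h / 4)) (X 0 \<omega>))"
        by (rule integrable_const_bound[where B="\<bar>c0\<bar>"]) (auto intro!: AE_I2 simp: indicator_def)
      show "integrable M (\<lambda>\<omega>. indicator L (X 0 \<omega>) * psi0 (X 0 \<omega> - z))" by (rule int0)
      fix \<omega>
      show "c0 * indicator (L \<inter> ball x (h / 4)) (X 0 \<omega>) \<le> indicator L (X 0 \<omega>) * psi0 (X 0 \<omega> - z)"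
      proof (cases "X 0 \<omega> \<in> L \<inter> ball x (h / 4)")
        case True
        then have "dist x (X 0 \<omega>) < h / 4" by simp
        then have "dist (X 0 \<omega>) z < h / 2" using x(2) dist_triangle[of "X 0 \<omega>" z x]
          by (simp add: dist_commute)
        moreover have "norm ((X 0 \<omega> - z) /\<^sub>R h) = dist (X 0 \<omega>) z / h" using h_pos
          by (simp add: dist_norm divide_inverse mult.commute)
        ultimately have "norm ((X 0 \<omega> - z) /\<^sub>R h) < 1 / 2" using h_pos
          by (simp add: divide_less_eq)
        then have "k ((X 0 \<omega> - z) /\<^sub>R h) \<ge> c0" using c0(2) by simp
        then show ?thesis using True unfolding psi0_def by simp
      next
        case False
        then show ?thesis using k_nonneg unfolding psi0_def by (simp add: indicator_def)
      qed
    qed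
    finally show ?thesis unfolding Gl_def using p_pos by (simp add: divide_right_mono)
  qed
  moreover have "c0 * m / p > 0" using c0(1) m(1) p_pos by simp
  ultimately show ?thesis by blast
qed

end


lemma alg_bound:
  fixes A An K Kn c \<alpha> \<beta> \<eta>0 :: real
  assumes Kn: "Kn \<ge> c / 2" and c: "c > 0" and K: "\<bar>Kn - K\<bar> \<le> \<eta>0"
    and A: "\<bar>A - An\<bar> \<le> \<alpha>" and An: "\<bar>An\<bar> \<le> \<beta>"
  shows "\<bar>(- A * Kn - K * (- An)) / (Kn * Kn)\<bar> \<le> 2 * \<alpha> / c + 4 * \<eta>0 * \<beta> / c\<^sup>2"
proof -
  have Kpos: "Kn > 0" using Kn c by simp
  have "- A * Kn - K * (- An) = - ((A - An) * Kn) - (Kn - K) * An" by (simp add: algebra_simps)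
  then have "\<bar>(- A * Kn - K * (- An)) / (Kn * Kn)\<bar> = \<bar>- ((A - An) * Kn) - (Kn - K) * An\<bar> / (Kn * Kn)"
    using Kpos by (simp add: abs_divide)
  also have "\<dots> \<le> (\<bar>A - An\<bar> * Kn + \<bar>Kn - K\<bar> * \<bar>An\<bar>) / (Kn * Kn)"
    using Kpos by (intro divide_right_mono) (auto simp: abs_mult intro: order_trans[OF abs_triangle_ineq4])
  also have "\<dots> = \<bar>A - An\<bar> / Kn + \<bar>Kn - K\<bar> * \<bar>An\<bar> / (Kn * Kn)"
    using Kpos by (simp add: add_divide_distrib)
  also have "\<bar>A - An\<bar> / Kn \<le> 2 * \<alpha> / c"
  proof -
    have "\<bar>A - An\<bar> / Kn \<le> \<alpha> / Kn" using A Kpos by (simp add: divide_right_mono)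
    also have "\<dots> \<le> \<alpha> / (c / 2)" using A Kpos Kn c by (intro divide_left_mono) auto
    also have "\<dots> = 2 * \<alpha> / c" by simp
    finally show ?thesis .
  qed
  also have "\<bar>Kn - K\<bar> * \<bar>An\<bar> / (Kn * Kn) \<le> 4 * \<eta>0 * \<beta> / c\<^sup>2"
  proof -
    have "\<bar>Kn - K\<bar> * \<bar>An\<bar> \<le> \<eta>0 * \<beta>" using K An by (intro mult_mono) auto
    then have "\<bar>Kn - K\<bar> * \<bar>An\<bar> / (Kn * Kn) \<le> \<eta>0 * \<beta> / (Kn * Kn)" using Kpos by (simp add: divide_right_mono)
    also have "\<dots> \<le> \<eta>0 * \<beta> / ((c / 2) * (c / 2))"
      using K An Kpos Kn c by (intro divide_left_mono mult_mono) (auto intro: order_trans[OF abs_ge_zero])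
    also have "\<dots> = 4 * \<eta>0 * \<beta> / c\<^sup>2" by (simp add: power2_eq_square field_simps)
    finally show ?thesis .
  qed
  finally show ?thesis by simp
qed

lemma basis_sum_bound:
  fixes w :: "'a::euclidean_space" and g :: "'a \<Rightarrow> real"
  assumes "\<And>b. b \<in> Basis \<Longrightarrow> \<bar>g b\<bar> \<le> B b"
  shows "\<bar>\<Sum>b\<in>Basis. (w \<bullet> b) * g b\<bar> \<le> norm w * (\<Sum>b\<in>Basis. B b)"
proof -
  have "\<bar>\<Sum>b\<in>Basis. (w \<bullet> b) * g b\<bar> \<le> (\<Sum>b\<in>Basis. \<bar>(w \<bullet> b) * g b\<bar>)" by (rule sum_abs)
  also have "\<dots> \<le> (\<Sum>b\<in>Basis. norm w * B b)"
  proof (rule sum_mono)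
    fix b :: 'a assume b: "b \<in> Basis"
    have "\<bar>w \<bullet> b\<bar> \<le> norm w" using Basis_le_norm[OF b] .
    moreover have "\<bar>g b\<bar> \<le> B b" using assms[OF b] .
    ultimately show "\<bar>(w \<bullet> b) * g b\<bar> \<le> norm w * B b"
      by (simp add: abs_mult) (intro mult_mono, auto)
  qed
  also have "\<dots> = norm w * (\<Sum>b\<in>Basis. B b)" by (simp add: sum_distrib_left)
  finally show ?thesis .
qed



context full
begin

lemma main_full:
  fixes fhat :: "nat \<Rightarrow> 'b \<Rightarrow> 'a \<Rightarrow> real" and \<epsilon> :: "nat \<Rightarrow> real" and \<phi> :: "nat \<Rightarrow> 'a \<Rightarrow> 'a"
  assumes eps_lim: "\<epsilon> \<longlonglongrightarrow> 0"
    and Om: "AE \<omega> in M. eventually (\<lambda>n. \<forall>x. \<bar>fhat n \<omega> x - f x\<bar> \<le> \<epsilon> n) sequentially"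
    and phi_der: "\<And>n x. (\<phi> n has_derivative frechet_derivative (\<phi> n) (at x)) (at x)"
    and phi_unif: "\<And>e. e > 0 \<Longrightarrow>
        eventually (\<lambda>n. \<forall>x\<in>superlevel f t. norm (\<phi> n x - x) \<le> e) sequentially"
    and phi_D_unif: "\<And>e. e > 0 \<Longrightarrow>
        eventually (\<lambda>n. \<forall>x\<in>superlevel f t.
          onorm (\<lambda>v. frechet_derivative (\<phi> n) (at x) v - v) \<le> e) sequentially"
  shows "AE \<omega> in M.
     (\<forall>e>0. eventually (\<lambda>n. \<forall>x\<in>superlevel f t.
        \<bar>Kh_lim M X f t k h (\<phi> n x) / Knh fhat X t k h n \<omega> (\<phi> n x) - 1\<bar> \<le> e) sequentially) \<and>
     (\<forall>e>0. eventually (\<lambda>n. \<forall>x\<in>superlevel f t. \<exists>D.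
        ((\<lambda>y. Kh_lim M X f t k h (\<phi> n y) / Knh fhat X t k h n \<omega> (\<phi> n y)) has_derivative D) (at x)
        \<and> onorm D \<le> e) sequentially)"
proof -
  define C where "C = {z. \<exists>x\<in>L. dist z x \<le> h / 4}"
  have "C = {x + y | x y. x \<in> L \<and> y \<in> cball 0 (h / 4)}"
  proof
    show "C \<subseteq> {x + y | x y. x \<in> L \<and> y \<in> cball 0 (h / 4)}"
    proof
      fix z assume "z \<in> C"
      then obtain x where x: "x \<in> L" "dist z x \<le> h / 4" unfolding C_def by blast
      then have "z = x + (z - x) \<and> x \<in> L \<and> z - x \<in> cball 0 (h / 4)" by (simp add: dist_norm norm_minus_commute)
      then show "z \<in> {x + y | x y. x \<in> L \<and> y \<in> cball 0 (h / 4)}" by blast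
    qed
    show "{x + y | x y. x \<in> L \<and> y \<in> cball 0 (h / 4)} \<subseteq> C"
    proof
      fix z assume "z \<in> {x + y | x y. x \<in> L \<and> y \<in> cball 0 (h / 4)}"
      then obtain x y where "z = x + y" "x \<in> L" "y \<in> cball 0 (h / 4)" by blast
      then have "x \<in> L \<and> dist z x \<le> h / 4" by (simp add: dist_norm)
      then show "z \<in> C" unfolding C_def by blast
    qed
  qed
  then have cC: "compact C"
    using compact_sums[OF Lt_cpt[folded L_def] compact_cball[of 0 "h / 4"]] by simp
  obtain c where c: "c > 0" "\<And>z. z \<in> C \<Longrightarrow> Gl psi0 z \<ge> c"
    using Gl_pos unfolding C_def by blast
  obtain Bk where Bk: "\<And>u. \<bar>psi0 u\<bar> \<le> Bk" using psi0_bdd by blast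
  have "\<forall>b. \<exists>B>0. \<forall>u. \<bar>psib b u\<bar> \<le> B" using psib_bdd by blast
  then obtain Bf where Bf: "\<And>b. Bf b > 0" "\<And>b u. \<bar>psib b u\<bar> \<le> Bf b" by metis
  define SB where "SB = (\<Sum>b\<in>Basis. Bf b)"
  have SB0: "SB \<ge> 0" unfolding SB_def using Bf(1) by (simp add: sum_nonneg less_imp_le)
  have U0: "AE \<omega> in M. \<forall>C. compact C \<longrightarrow> (\<forall>e>0. eventually (\<lambda>n. \<forall>z\<in>C. \<bar>Gn fhat psi0 n \<omega> z - Gl psi0 z\<bar> \<le> e) sequentially)"
    by (rule uniform[OF eps_lim Om psi0_cont psi0_uc Bk])
  have Ub: "AE \<omega> in M. \<forall>b\<in>Basis. \<forall>C. compact C \<longrightarrow> (\<forall>e>0. eventually (\<lambda>n. \<forall>z\<in>C. \<bar>Gn fhat (psib b) n \<omega> z - Gl (psib b) z\<bar> \<le> e) sequentially)"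
    by (intro AE_finite_allI finite_Basis uniform[OF eps_lim Om psib_cont psib_uc Bf(2)])
  have Cev: "eventually (\<lambda>n. \<forall>x\<in>L. \<phi> n x \<in> C) sequentially"
    using phi_unif[of "h / 4"] h_pos
    by (auto simp: L_def C_def dist_norm elim!: eventually_mono)
  have Dev: "eventually (\<lambda>n. \<forall>x\<in>L. onorm (\<lambda>v. frechet_derivative (\<phi> n) (at x) v - v) \<le> 1) sequentially"
    using phi_D_unif[of 1] by (simp add: L_def)
  have feq: "(\<lambda>y. Kh_lim M X f t k h (\<phi> n y) / Knh fhat X t k h n \<omega> (\<phi> n y))
      = (\<lambda>y. Gl psi0 (\<phi> n y) / Gn fhat psi0 n \<omega> (\<phi> n y))" for n \<omega>
    by (simp add: Kh_lim_eq Knh_eq)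
  show ?thesis
    using U0 Ub
  proof eventually_elim
    case (elim \<omega>)
    note u0 = elim(1)[rule_format, OF cC] and ub = elim(2)
    show ?case
    proof (intro conjI allI impI)
      fix e :: real assume e: "e > 0"
      define \<eta> where "\<eta> = min (c / 2) (c * e / 2)"
      have \<eta>: "\<eta> > 0" unfolding \<eta>_def using c e by simp
      show "eventually (\<lambda>n. \<forall>x\<in>superlevel f t.
          \<bar>Kh_lim M X f t k h (\<phi> n x) / Knh fhat X t k h n \<omega> (\<phi> n x) - 1\<bar> \<le> e) sequentially"
        using u0[OF \<eta>] Cev
      proof eventually_elim
        case (elim n)
        show ?case
        proof
          fix x assume "x \<in> superlevel f t"
          then have zC: "\<phi> n x \<in> C" using elim(2) unfolding L_def by blast
          define z where "z = \<phi> n x"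
          have d: "\<bar>Gn fhat psi0 n \<omega> z - Gl psi0 z\<bar> \<le> \<eta>" using elim(1) zC unfolding z_def by blast
          have Kc: "Gl psi0 z \<ge> c" using c(2) zC unfolding z_def by blast
          have Kn: "Gn fhat psi0 n \<omega> z \<ge> c / 2" using d Kc unfolding \<eta>_def by linarith
          have Knpos: "Gn fhat psi0 n \<omega> z > 0" using Kn c by linarith
          have "Gl psi0 z / Gn fhat psi0 n \<omega> z - 1 = (Gl psi0 z - Gn fhat psi0 n \<omega> z) / Gn fhat psi0 n \<omega> z"
            using Knpos by (simp add: field_simps)
          then have "\<bar>Gl psi0 z / Gn fhat psi0 n \<omega> z - 1\<bar> = \<bar>Gl psi0 z - Gn fhat psi0 n \<omega> z\<bar> / Gn fhat psi0 n \<omega> z"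
            using Knpos by (simp add: abs_divide)
          also have "\<dots> \<le> \<eta> / (c / 2)"
            using d Knpos Kn c \<eta> by (intro frac_le) (auto simp: abs_minus_commute)
          also have "\<dots> \<le> e" unfolding \<eta>_def using c e by (simp add: field_simps min_def)
          finally show "\<bar>Kh_lim M X f t k h (\<phi> n x) / Knh fhat X t k h n \<omega> (\<phi> n x) - 1\<bar> \<le> e"
            unfolding z_def by (simp add: Kh_lim_eq Knh_eq)
        qed
      qed
    next
      fix e :: real assume e: "e > 0"
      define d where "d = real DIM('a)"
      have d: "d > 0" unfolding d_def by simp
      define \<eta>1 where "\<eta>1 = e * c / (8 * d)"
      define \<eta>0 where "\<eta>0 = min (c / 2) (e * c\<^sup>2 / (16 * (SB + 1)))"
      have \<eta>1: "\<eta>1 > 0" unfolding \<eta>1_def using e c d by simp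
      have \<eta>0: "\<eta>0 > 0" unfolding \<eta>0_def using e c SB0 by simp
      have ubev: "eventually (\<lambda>n. \<forall>b\<in>Basis. \<forall>z\<in>C. \<bar>Gn fhat (psib b) n \<omega> z - Gl (psib b) z\<bar> \<le> \<eta>1) sequentially"
        using ub cC \<eta>1 by (intro eventually_ball_finite finite_Basis) blast
      show "eventually (\<lambda>n. \<forall>x\<in>superlevel f t. \<exists>D.
          ((\<lambda>y. Kh_lim M X f t k h (\<phi> n y) / Knh fhat X t k h n \<omega> (\<phi> n y)) has_derivative D) (at x)
          \<and> onorm D \<le> e) sequentially"
        using u0[OF \<eta>0] ubev Cev Dev
      proof eventually_elim
        case (elim n)
        show ?case
        proof
          fix x assume xL: "x \<in> superlevel f t"
          then have zC: "\<phi> n x \<in> C" using elim(3) unfolding L_def by blast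
          define z where "z = \<phi> n x"
          define D\<phi> where "D\<phi> = frechet_derivative (\<phi> n) (at x)"
          define K where "K = Gl psi0 z"
          define Kn where "Kn = Gn fhat psi0 n \<omega> z"
          have dK: "\<bar>Kn - K\<bar> \<le> \<eta>0" using elim(1) zC unfolding z_def Kn_def K_def by blast
          have Kc: "K \<ge> c" using c(2) zC unfolding z_def K_def by blast
          have Kn: "Kn \<ge> c / 2" using dK Kc unfolding \<eta>0_def by linarith
          have Knpos: "Kn \<noteq> 0" using Kn c by linarith
          have hK: "((\<lambda>y. Gl psi0 (\<phi> n y)) has_derivative
              (\<lambda>v. - (\<Sum>b\<in>Basis. (D\<phi> v \<bullet> b) * Gl (psib b) z))) (at x)"
            unfolding D\<phi>_def z_def by (rule has_derivative_compose[OF phi_der Gl_deriv])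
          have hKn: "((\<lambda>y. Gn fhat psi0 n \<omega> (\<phi> n y)) has_derivative
              (\<lambda>v. - (\<Sum>b\<in>Basis. (D\<phi> v \<bullet> b) * Gn fhat (psib b) n \<omega> z))) (at x)"
            unfolding D\<phi>_def z_def by (rule has_derivative_compose[OF phi_der Gn_deriv])
          define D where "D v = ((- (\<Sum>b\<in>Basis. (D\<phi> v \<bullet> b) * Gl (psib b) z)) * Kn
              - K * (- (\<Sum>b\<in>Basis. (D\<phi> v \<bullet> b) * Gn fhat (psib b) n \<omega> z))) / (Kn * Kn)" for v
          have hD: "((\<lambda>y. Gl psi0 (\<phi> n y) / Gn fhat psi0 n \<omega> (\<phi> n y)) has_derivative D) (at x)"
            using has_derivative_divide'[OF hK hKn] Knpos unfolding D_def K_def Kn_def z_def by simp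
          have blD: "bounded_linear (\<lambda>v. D\<phi> v - v)"
            unfolding D\<phi>_def
            by (intro bounded_linear_sub has_derivative_bounded_linear[OF phi_der] bounded_linear_ident)
          have onD: "onorm (\<lambda>v. D\<phi> v - v) \<le> 1" using elim(4) xL unfolding L_def D\<phi>_def by blast
          have "\<bar>D v\<bar> \<le> e * norm v" for v
          proof -
            define w where "w = D\<phi> v"
            have "norm (w - v) \<le> onorm (\<lambda>v. D\<phi> v - v) * norm v" unfolding w_def by (rule onorm[OF blD])
            also have "\<dots> \<le> 1 * norm v" using onD by (intro mult_right_mono) auto
            finally have "norm (w - v) \<le> norm v" by simp
            then have nw: "norm w \<le> 2 * norm v" using norm_triangle_ineq2[of w v] by linarith
            define A where "A = (\<Sum>b\<in>Basis. (w \<bullet> b) * Gl (psib b) z)"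
            define An where "An = (\<Sum>b\<in>Basis. (w \<bullet> b) * Gn fhat (psib b) n \<omega> z)"
            have "A - An = (\<Sum>b\<in>Basis. (w \<bullet> b) * (Gl (psib b) z - Gn fhat (psib b) n \<omega> z))"
              unfolding A_def An_def by (simp add: sum_subtractf right_diff_distrib)
            also have "\<bar>\<dots>\<bar> \<le> norm w * (\<Sum>b\<in>(Basis::'a set). \<eta>1)"
            proof -
              have bb: "\<And>b. b \<in> Basis \<Longrightarrow> \<bar>Gl (psib b) z - Gn fhat (psib b) n \<omega> z\<bar> \<le> \<eta>1"
                using elim(2) zC by (auto simp: z_def abs_minus_commute)
              show ?thesis using basis_sum_bound[of "\<lambda>b. Gl (psib b) z - Gn fhat (psib b) n \<omega> z" "\<lambda>_. \<eta>1" w, OF bb] by simp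
            qed
            finally have dA: "\<bar>A - An\<bar> \<le> norm w * (d * \<eta>1)" unfolding d_def by simp
            have dAn: "\<bar>An\<bar> \<le> norm w * SB"
              unfolding An_def SB_def by (rule basis_sum_bound) (rule Gn_bound[OF Bf(2)])
            have "\<bar>D v\<bar> = \<bar>(- A * Kn - K * (- An)) / (Kn * Kn)\<bar>"
              unfolding D_def A_def An_def w_def by simp
            also have "\<dots> \<le> 2 * (norm w * (d * \<eta>1)) / c + 4 * \<eta>0 * (norm w * SB) / c\<^sup>2"
              by (rule alg_bound[OF Kn c(1) dK dA dAn])
            also have "\<dots> = norm w * (2 * d * \<eta>1 / c + 4 * \<eta>0 * SB / c\<^sup>2)" by (simp add: field_simps)
            also have "2 * d * \<eta>1 / c = e / 4" unfolding \<eta>1_def using c d by (simp add: field_simps)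
            also have "4 * \<eta>0 * SB / c\<^sup>2 \<le> e / 4"
            proof -
              have "\<eta>0 \<le> e * c\<^sup>2 / (16 * (SB + 1))" unfolding \<eta>0_def by simp
              then have "4 * \<eta>0 * SB \<le> 4 * (e * c\<^sup>2 / (16 * (SB + 1))) * SB"
                using SB0 by (intro mult_right_mono) auto
              also have "\<dots> = (e * c\<^sup>2 / 4) * (SB / (SB + 1))" using SB0 by (simp add: field_simps)
              also have "\<dots> \<le> (e * c\<^sup>2 / 4) * 1"
                using SB0 e by (intro mult_left_mono) (auto simp: divide_le_eq)
              finally have "4 * \<eta>0 * SB \<le> e * c\<^sup>2 / 4" by simp
              then show ?thesis using c by (simp add: divide_le_eq field_simps)
            qed
            then have "norm w * (e / 4 + 4 * \<eta>0 * SB / c\<^sup>2) \<le> norm w * (e / 4 + e / 4)"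
              by (intro mult_left_mono) auto
            also have "\<dots> = norm w * (e / 2)" by simp
            also have "\<dots> \<le> (2 * norm v) * (e / 2)" using nw e by (intro mult_right_mono) auto
            also have "\<dots> = e * norm v" by simp
            finally show ?thesis .
          qed
          then have "onorm D \<le> e" by (intro onorm_le) simp
          then show "\<exists>D. ((\<lambda>y. Kh_lim M X f t k h (\<phi> n y) / Knh fhat X t k h n \<omega> (\<phi> n y)) has_derivative D) (at x)
              \<and> onorm D \<le> e"
            using hD unfolding feq by blast
        qed
      qed
    qed
  qed
qed

end


theorem lemma5:
  fixes M :: "'b measure"
    and X :: "nat \<Rightarrow> 'b \<Rightarrow> 'a::euclidean_space"
    and f :: "'a \<Rightarrow> real"
    and Df :: "'a \<Rightarrow> ('a \<Rightarrow>\<^sub>L real)"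
    and D2f :: "'a \<Rightarrow> ('a \<Rightarrow>\<^sub>L 'a \<Rightarrow>\<^sub>L real)"
    and t h \<epsilon>0 :: real
    and k :: "'a \<Rightarrow> real"
    and \<epsilon> :: "nat \<Rightarrow> real"
    and \<phi> :: "nat \<Rightarrow> 'a \<Rightarrow> 'a"
    and fhat :: "nat \<Rightarrow> 'b \<Rightarrow> 'a \<Rightarrow> real"
  assumes P: "prob_space M"
    and indep: "prob_space.indep_vars M (\<lambda>_. borel) X UNIV"
    and dens_nonneg: "\<And>x. f x \<ge> 0"
    and distr: "\<And>i. distributed M lborel (X i) (\<lambda>x. ennreal (f x))"
    \<comment> \<open>level t\<close>
    and t_pos: "t > 0"
    and t_int: "t \<in> interior (range f)"
    and Lt_ne: "superlevel f t \<noteq> {}"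
    and Lt_cpt: "compact (superlevel f t)"
    \<comment> \<open>Assumption 1\<close>
    and f_D1: "\<And>x. (f has_derivative blinfun_apply (Df x)) (at x)"
    and f_D2: "\<And>x. (Df has_derivative blinfun_apply (D2f x)) (at x)"
    and f_D2_cont: "continuous_on UNIV D2f"
    and grad_pos: "\<And>x. f x = t \<Longrightarrow> norm (Df x) > 0"
    and f_bdd: "\<exists>B. \<forall>x. \<bar>f x\<bar> \<le> B \<and> norm (Df x) \<le> B \<and> norm (D2f x) \<le> B"
    \<comment> \<open>Assumption 2\<close>
    and k_nonneg: "\<And>x. k x \<ge> 0"
    and k_C2: "C2_fun k"
    and k_supp: "closure {x. k x \<noteq> 0} = cball 0 1"
    and k_low: "\<exists>c>0. \<forall>x\<in>cball 0 (1/2). k x \<ge> c"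
    and k_sym: "\<And>x. k (- x) = k x"
    \<comment> \<open>h and \<epsilon>0\<close>
    and h_pos: "h > 0"
    and eps0_pos: "\<epsilon>0 > 0"
    and no_crit: "\<And>x. x \<in> band f (t - \<epsilon>0) (t + \<epsilon>0) \<Longrightarrow> Df x \<noteq> 0"
    and eps0_alpha: "\<epsilon>0 / Inf ((\<lambda>x. norm (Df x)) ` band f (t - \<epsilon>0) t) < h / 2"
    \<comment> \<open>the sequence \<epsilon>_n\<close>
    and eps_pos: "\<And>n. 0 < \<epsilon> n"
    and eps_le: "\<And>n. \<epsilon> n \<le> \<epsilon>0"
    and eps_lim: "\<epsilon> \<longlonglongrightarrow> 0"
    \<comment> \<open>the diffeomorphisms \<phi>_n\<close>
    and phi_diffeo: "\<And>n. C1_diffeo (\<phi> n)"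
    and phi_img: "\<And>n. \<phi> n ` superlevel f t = superlevel f (t - \<epsilon> n)"
    and phi_unif: "\<And>e. e > 0 \<Longrightarrow>
        eventually (\<lambda>n. \<forall>x\<in>superlevel f t. norm (\<phi> n x - x) \<le> e) sequentially"
    and phi_D_unif: "\<And>e. e > 0 \<Longrightarrow>
        eventually (\<lambda>n. \<forall>x\<in>superlevel f t.
          onorm (\<lambda>v. frechet_derivative (\<phi> n) (at x) v - v) \<le> e) sequentially"
    \<comment> \<open>the estimator: built from X_1..X_n, measurable, differentiable\<close>
    and fhat_sample: "\<And>n \<omega> \<omega>'. (\<forall>i<n. X i \<omega> = X i \<omega>') \<Longrightarrow> fhat n \<omega> = fhat n \<omega>'"
    and fhat_meas: "\<And>n x. (\<lambda>\<omega>. fhat n \<omega> x) \<in> borel_measurable M"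
    and fhat_diff: "\<And>n \<omega> x. fhat n \<omega> differentiable (at x)"
    \<comment> \<open>indicator of \<Omega>_n tends to 1 almost surely\<close>
    and Omega_as: "AE \<omega> in M. eventually (\<lambda>n. Omega_n fhat f Df t \<epsilon>0 \<epsilon> n \<omega>) sequentially"
  shows "AE \<omega> in M.
     (\<forall>e>0. eventually (\<lambda>n. \<forall>x\<in>superlevel f t.
        \<bar>Kh_lim M X f t k h (\<phi> n x) / Knh fhat X t k h n \<omega> (\<phi> n x) - 1\<bar> \<le> e) sequentially) \<and>
     (\<forall>e>0. eventually (\<lambda>n. \<forall>x\<in>superlevel f t. \<exists>D.
        ((\<lambda>y. Kh_lim M X f t k h (\<phi> n y) / Knh fhat X t k h n \<omega> (\<phi> n y)) has_derivative D) (at x)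
        \<and> onorm D \<le> e) sequentially)"
proof -
  have Dc: "continuous_on UNIV Df"
    using f_D2 has_derivative_continuous continuous_at_imp_continuous_on by blast
  have gp: "\<And>x. f x = t \<Longrightarrow> norm (Df x) > 0" by (rule grad_pos)
  have "sdata M X f Df t"
    unfolding sdata_def sdata_axioms_def
    using P indep dens_nonneg distr t_pos Lt_ne Lt_cpt f_D1 Dc gp by blast
  moreover have "kern k" unfolding kern_def using k_nonneg k_C2 k_supp by blast
  moreover have "full_axioms k h" unfolding full_axioms_def using h_pos k_low by blast
  ultimately have "full M X f Df t k h" unfolding full_def by blast
  then interpret F: full M X f Df t k h .
  have Om: "AE \<omega> in M. eventually (\<lambda>n. \<forall>x. \<bar>fhat n \<omega> x - f x\<bar> \<le> \<epsilon> n) sequentially"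
    using Omega_as by (rule AE_mp) (auto intro!: AE_I2 elim!: eventually_mono simp: Omega_n_def)
  have phi_der: "(\<phi> n has_derivative frechet_derivative (\<phi> n) (at x)) (at x)" for n x
  proof -
    obtain g' where "\<forall>x. (\<phi> n has_derivative blinfun_apply (g' x)) (at x)"
      using phi_diffeo[of n] unfolding C1_diffeo_def C1_fun_def by blast
    then have "\<phi> n differentiable (at x)" unfolding differentiable_def by blast
    then show "(\<phi> n has_derivative frechet_derivative (\<phi> n) (at x)) (at x)"
      using frechet_derivative_works by blast
  qed
  show ?thesis by (rule F.main_full[OF eps_lim Om phi_der phi_unif phi_D_unif])
qed



end
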